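(* Assume [H1]. Then the value function $u$ is continuous on $\mathcal G\times[0,T)$ (with respect to the geodesic distance on $\mathcal G$).
   Context: Let $N\ge 2$, $d\ge 1$, and let $e_1,\dots,e_N\in\mathbb R^d$ be pairwise distinct unit vectors. Let $J_i=\{s e_i: s\ge 0\}$, $\mathcal G=\bigcup_{i=1}^N J_i$ and $O=0$, with geodesic distance $d(x,y)=|x-y|$ if $x,y$ lie in a common $J_i$ and $d(x,y)=|x|+|y|$ otherwise. Fix $T>0$. For $i=0,\dots,N$ let $A_i=\{i\}\times\mathbb R$, $A=\bigcup_{i=0}^N A_i$ (disjoint union); for $a=(i,\bar a)$ write $|a|=|\bar a|$. Let $M=\{(x,a): x\in\mathcal G,\ a\in A_i \text{ if } x\in J_i\setminus\{O\},\ a\in A \text{ if } x=O\}$ and $f:M\to\mathbb R^d$, $f(x,(i,\bar a))=\bar a e_i$ for $i\ge 1$, $f(O,(0,\bar a))=0$. For $0\le t<T$ and $x\in\mathcal G$, $\Gamma_t[x]$ is the set of pairs $(y,\alpha)$ with $y\in W^{1,2}([t,T];\mathcal G)$, $\alpha:[t,T]\to A$ measurable, $(y(s),\alpha(s))\in M$ a.e., $\int|\alpha|^2<\infty$, and $y(s)=x+\int_t^s f(y(\tau),\alpha(\tau))\,d\tau$. [H1]: for $i=1,\dots,N$, $\ell_i:J_i\times[0,T]\to\mathbb R$ and $g_i:J_i\to\mathbb R$ continuous and bounded; $\ell_*:[0,T]\to\mathbb R$ continuous and bounded; $g_*\in\mathbb R$. $\ell_O(t)=\min\{\ell_*(t),\min_i\ell_i(O,t)\}$;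 $L(x,t)=\ell_i(x,t)$ for $x\in J_i\setminus\{O\}$, $L(O,t)=\ell_O(t)$; $g=g_i$ on $J_i\setminus\{O\}$, $g(O)=\min\{g_*,\min_i g_i(O)\}$. $J_t(x;(y,\alpha))=\int_t^T\big(L(y(\tau),\tau)+\tfrac12|\alpha(\tau)|^2\big)d\tau+g(y(T))$ and $u(x,t)=\inf_{(y,\alpha)\in\Gamma_t[x]}J_t(x;(y,\alpha))$. *)

theory Defs
  imports "HOL-Analysis.Analysis"
begin

text \<open>Edges are indexed by 1..N; the unit vectors are e 1, ..., e N.
  A control a = (i, abar) :: nat \<times> real lies in A_i; A = {0..N} \<times> real.\<close>

definition J_edge :: "'a::real_normed_vector \<Rightarrow> 'a set" where
  "J_edge v = {s *\<^sub>R v | s. s \<ge> 0}"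

definition Graph :: "nat \<Rightarrow> (nat \<Rightarrow> 'a::real_normed_vector) \<Rightarrow> 'a set" where
  "Graph N e = (\<Union>i\<in>{1..N}. J_edge (e i))"

definition gdist :: "nat \<Rightarrow> (nat \<Rightarrow> 'a::real_normed_vector) \<Rightarrow> 'a \<Rightarrow> 'a \<Rightarrow> real" where
  "gdist N e x y =
     (if \<exists>i\<in>{1..N}. x \<in> J_edge (e i) \<and> y \<in> J_edge (e i) then norm (x - y) else norm x + norm y)"

definition inM :: "nat \<Rightarrow> (nat \<Rightarrow> 'a::real_normed_vector) \<Rightarrow> 'a \<Rightarrow> nat \<times> real \<Rightarrow> bool" where
  "inM N e x a = (fst a \<le> N \<and> (x \<noteq> 0 \<longrightarrow> 1 \<le> fst a \<and> x \<in> J_edge (e (fst a))))"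

text \<open>dynamics f(x,(i,abar)) = abar e_i for i \<ge> 1, and 0 for i = 0 (only used at O)\<close>
definition fdyn :: "(nat \<Rightarrow> 'a::real_normed_vector) \<Rightarrow> nat \<times> real \<Rightarrow> 'a" where
  "fdyn e a = (if fst a = 0 then 0 else snd a *\<^sub>R e (fst a))"

definition admissible ::
  "nat \<Rightarrow> (nat \<Rightarrow> 'a::euclidean_space) \<Rightarrow> real \<Rightarrow> real \<Rightarrow> 'a \<Rightarrow> (real \<Rightarrow> 'a) \<Rightarrow> (real \<Rightarrow> nat \<times> real) \<Rightarrow> bool" where
  "admissible N e T t x y \<alpha> =
     ((\<forall>s\<in>{t..T}. y s \<in> Graph N e)
      \<and> (\<lambda>s. real (fst (\<alpha> s))) \<in> borel_measurable (lebesgue_on {t..T})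
      \<and> (\<lambda>s. snd (\<alpha> s)) \<in> borel_measurable (lebesgue_on {t..T})
      \<and> (AE s in lebesgue_on {t..T}. inM N e (y s) (\<alpha> s))
      \<and> (\<lambda>s. (snd (\<alpha> s))\<^sup>2) integrable_on {t..T}
      \<and> (\<lambda>s. fdyn e (\<alpha> s)) integrable_on {t..T}
      \<and> (\<forall>s\<in>{t..T}. y s = x + integral {t..s} (\<lambda>\<tau>. fdyn e (\<alpha> \<tau>))))"

definition ellO :: "nat \<Rightarrow> (nat \<Rightarrow> 'a::real_normed_vector \<Rightarrow> real \<Rightarrow> real) \<Rightarrow> (real \<Rightarrow> real) \<Rightarrow> real \<Rightarrow> real" where
  "ellO N l ls t = min (ls t) (Min {l i 0 t | i. i \<in> {1..N}})"

definition gO :: "nat \<Rightarrow> (nat \<Rightarrow> 'a::real_normed_vector \<Rightarrow> real) \<Rightarrow> real \<Rightarrow> real" where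
  "gO N g gs = min gs (Min {g i 0 | i. i \<in> {1..N}})"

definition edge_index :: "nat \<Rightarrow> (nat \<Rightarrow> 'a::real_normed_vector) \<Rightarrow> 'a \<Rightarrow> nat" where
  "edge_index N e x = (THE i. i \<in> {1..N} \<and> x \<in> J_edge (e i))"

definition Lrun :: "nat \<Rightarrow> (nat \<Rightarrow> 'a::real_normed_vector) \<Rightarrow> (nat \<Rightarrow> 'a \<Rightarrow> real \<Rightarrow> real) \<Rightarrow> (real \<Rightarrow> real)
    \<Rightarrow> 'a \<Rightarrow> real \<Rightarrow> real" where
  "Lrun N e l ls x t = (if x = 0 then ellO N l ls t else l (edge_index N e x) x t)"

definition gfin :: "nat \<Rightarrow> (nat \<Rightarrow> 'a::real_normed_vector) \<Rightarrow> (nat \<Rightarrow> 'a \<Rightarrow> real) \<Rightarrow> real \<Rightarrow> 'a \<Rightarrow> real" where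
  "gfin N e g gs x = (if x = 0 then gO N g gs else g (edge_index N e x) x)"

definition cost ::
  "nat \<Rightarrow> (nat \<Rightarrow> 'a::euclidean_space) \<Rightarrow> (nat \<Rightarrow> 'a \<Rightarrow> real \<Rightarrow> real) \<Rightarrow> (real \<Rightarrow> real)
   \<Rightarrow> (nat \<Rightarrow> 'a \<Rightarrow> real) \<Rightarrow> real \<Rightarrow> real \<Rightarrow> real \<Rightarrow> (real \<Rightarrow> 'a) \<Rightarrow> (real \<Rightarrow> nat \<times> real) \<Rightarrow> real" where
  "cost N e l ls g gs T t y \<alpha> =
     integral {t..T} (\<lambda>\<tau>. Lrun N e l ls (y \<tau>) \<tau> + (snd (\<alpha> \<tau>))\<^sup>2 / 2) + gfin N e g gs (y T)"

definition value_fun ::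
  "nat \<Rightarrow> (nat \<Rightarrow> 'a::euclidean_space) \<Rightarrow> (nat \<Rightarrow> 'a \<Rightarrow> real \<Rightarrow> real) \<Rightarrow> (real \<Rightarrow> real)
   \<Rightarrow> (nat \<Rightarrow> 'a \<Rightarrow> real) \<Rightarrow> real \<Rightarrow> real \<Rightarrow> 'a \<Rightarrow> real \<Rightarrow> real" where
  "value_fun N e l ls g gs T x t =
     Inf {cost N e l ls g gs T t y \<alpha> | y \<alpha>. admissible N e T t x y \<alpha>}"

end

theory Submission
  imports Defs
begin

locale SG =
  fixes N :: nat and e :: "nat \<Rightarrow> 'a::euclidean_space" and T :: real
    and l :: "nat \<Rightarrow> 'a \<Rightarrow> real \<Rightarrow> real" and ls :: "real \<Rightarrow> real"
    and g :: "nat \<Rightarrow> 'a \<Rightarrow> real" and gs :: real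
  assumes N2: "N \<ge> 2"
    and unit: "\<forall>i\<in>{1..N}. norm (e i) = 1"
    and distinct: "inj_on e {1..N}"
    and Tpos: "T > 0"
    and l_cont: "\<forall>i\<in>{1..N}. continuous_on (J_edge (e i) \<times> {0..T}) (\<lambda>(x, t). l i x t)"
    and l_bdd: "\<forall>i\<in>{1..N}. bounded ((\<lambda>(x, t). l i x t) ` (J_edge (e i) \<times> {0..T}))"
    and g_cont: "\<forall>i\<in>{1..N}. continuous_on (J_edge (e i)) (g i)"
    and g_bdd: "\<forall>i\<in>{1..N}. bounded (g i ` J_edge (e i))"
    and ls_cont: "continuous_on {0..T} ls"
    and ls_bdd: "bounded (ls ` {0..T})"
begin

abbreviation "G \<equiv> Graph N e"
abbreviation "L \<equiv> Lrun N e l ls"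
abbreviation "gf \<equiv> gfin N e g gs"

lemma unit': "i \<in> {1..N} \<Longrightarrow> norm (e i) = 1"
  using unit by blast

lemma J_iff: "z \<in> J_edge v \<longleftrightarrow> (\<exists>s\<ge>0. z = s *\<^sub>R v)"
  unfolding J_edge_def by blast

lemma J_norm: assumes "i \<in> {1..N}" "z \<in> J_edge (e i)" shows "z = norm z *\<^sub>R e i"
proof -
  obtain s where "s \<ge> 0" "z = s *\<^sub>R e i" using assms(2) J_iff by blast
  moreover have "norm z = s" using calculation unit'[OF assms(1)] by simp
  ultimately show ?thesis by simp
qed

lemma zero_J[simp]: "0 \<in> J_edge v"
  unfolding J_iff by (rule exI[of _ 0]) simp

lemma J_scale: "s \<ge> 0 \<Longrightarrow> s *\<^sub>R v \<in> J_edge v"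
  unfolding J_iff by blast

lemma J_uniq:
  assumes "i \<in> {1..N}" "j \<in> {1..N}" "z \<in> J_edge (e i)" "z \<in> J_edge (e j)" "z \<noteq> 0"
  shows "i = j"
proof -
  have "z = norm z *\<^sub>R e i" "z = norm z *\<^sub>R e j" using J_norm assms by blast+
  then have "norm z *\<^sub>R e i = norm z *\<^sub>R e j" by simp
  then have "e i = e j" using assms(5) by simp
  then show ?thesis using distinct assms(1,2) by (meson inj_onD)
qed

lemma edge_index_eq:
  assumes "i \<in> {1..N}" "z \<in> J_edge (e i)" "z \<noteq> 0"
  shows "edge_index N e z = i"
  unfolding edge_index_def
proof (rule the_equality)
  show "i \<in> {1..N} \<and> z \<in> J_edge (e i)" using assms by blast
  fix j assume "j \<in> {1..N} \<and> z \<in> J_edge (e j)"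
  then show "j = i" using J_uniq[of j i z] assms by blast
qed

lemma G_iff: "z \<in> G \<longleftrightarrow> (\<exists>i\<in>{1..N}. z \<in> J_edge (e i))"
  unfolding Graph_def by blast

lemma zero_G[simp]: "0 \<in> G"
  using N2 unfolding G_iff by (intro bexI[of _ 1]) auto

lemma J_sub_G: "i \<in> {1..N} \<Longrightarrow> J_edge (e i) \<subseteq> G"
  using G_iff by blast

lemma J_closed: "closed (J_edge (v::'a))"
proof -
  have "J_edge v = (\<lambda>s. s *\<^sub>R v) ` {0..}" unfolding J_edge_def by auto
  moreover have "closed ((\<lambda>s. s *\<^sub>R v) ` {0..})"
  proof (cases "v = 0")
    case True
    then show ?thesis by (simp add: image_constant_conv)
  next
    case False
    have lin: "linear (\<lambda>s::real. s *\<^sub>R v)" by (simp add: linearI scaleR_add_left)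
    have inj: "inj (\<lambda>s::real. s *\<^sub>R v)" using False by (auto simp: inj_def)
    show ?thesis by (rule closed_injective_linear_image[OF closed_atLeast lin inj])
  qed
  ultimately show ?thesis by simp
qed

lemma J_seg:
  assumes "i \<in> {1..N}" "a \<in> J_edge (e i)" "b \<in> J_edge (e i)" "0 \<le> c" "c \<le> 1"
  shows "a + c *\<^sub>R (b - a) \<in> J_edge (e i)"
proof -
  have a: "a = norm a *\<^sub>R e i" and b: "b = norm b *\<^sub>R e i" using J_norm assms by blast+
  have "a + c *\<^sub>R (b - a) = (norm a + c * (norm b - norm a)) *\<^sub>R e i"
    by (subst a, subst b, subst a) (simp add: algebra_simps)
  moreover have "norm a + c * (norm b - norm a) \<ge> 0"
  proof -
    have "norm a + c * (norm b - norm a) = (1 - c) * norm a + c * norm b" by (simp add: algebra_simps)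
    also have "\<dots> \<ge> 0" using assms by simp
    finally show ?thesis .
  qed
  ultimately show ?thesis by (simp add: J_scale)
qed

lemma gdist_ge: "norm (x - y) \<le> gdist N e x y"
  unfolding gdist_def by (auto simp: norm_triangle_ineq4)

lemma gdist_sym: "gdist N e x y = gdist N e y x"
  unfolding gdist_def by (auto simp: norm_minus_commute)

end


lemma Min_cont:
  fixes f :: "nat \<Rightarrow> real \<Rightarrow> real"
  assumes "finite I" "I \<noteq> {}" "\<forall>i\<in>I. continuous_on S (f i)"
  shows "continuous_on S (\<lambda>t. Min {f i t | i. i \<in> I})"
  using assms
proof (induction I rule: finite_ne_induct)
  case (singleton x)
  have "{f i t | i. i \<in> {x}} = {f x t}" for t by auto
  then show ?case using singleton by simp
next
  case (insert x F)
  have eq: "{f i t | i. i \<in> insert x F} = insert (f x t) {f i t | i. i \<in> F}" for t by auto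
  have fin: "finite {f i t | i. i \<in> F}" for t using insert(1) by simp
  have ne: "{f i t | i. i \<in> F} \<noteq> {}" for t using insert(2) by auto
  have "continuous_on S (\<lambda>t. min (f x t) (Min {f i t | i. i \<in> F}))"
    using insert by (intro continuous_on_min) auto
  then show ?case unfolding eq using Min_insert[OF fin ne] by simp
qed

context SG
begin

lemma l_cont_t: "i \<in> {1..N} \<Longrightarrow> z \<in> J_edge (e i) \<Longrightarrow> continuous_on {0..T} (l i z)"
proof -
  assume i: "i \<in> {1..N}" and z: "z \<in> J_edge (e i)"
  have c: "continuous_on (J_edge (e i) \<times> {0..T}) (\<lambda>(x, t). l i x t)" using l_cont i by blast
  have "continuous_on {0..T} ((\<lambda>(x, t). l i x t) \<circ> (\<lambda>t. (z, t)))"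
    by (rule continuous_on_compose) (auto intro!: continuous_intros continuous_on_subset[OF c] simp: z)
  then show ?thesis by (simp add: o_def)
qed

lemma ellO_cont: "continuous_on {0..T} (ellO N l ls)"
proof -
  have "continuous_on {0..T} (\<lambda>t. Min {l i 0 t | i. i \<in> {1..N}})"
    using N2 by (intro Min_cont) (auto intro: l_cont_t)
  then show ?thesis unfolding ellO_def[abs_def] using ls_cont by (intro continuous_on_min) auto
qed

lemma Lrun_edge: "i \<in> {1..N} \<Longrightarrow> z \<in> J_edge (e i) \<Longrightarrow> z \<noteq> 0 \<Longrightarrow> L z t = l i z t"
  unfolding Lrun_def using edge_index_eq by simp

lemma Lrun_zero: "L 0 t = ellO N l ls t"
  unfolding Lrun_def by simp

lemma gfin_edge: "i \<in> {1..N} \<Longrightarrow> z \<in> J_edge (e i) \<Longrightarrow> z \<noteq> 0 \<Longrightarrow> gf z = g i z"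
  unfolding gfin_def using edge_index_eq by simp

lemma bounds: "\<exists>C\<ge>0. (\<forall>z\<in>G. \<forall>\<tau>\<in>{0..T}. \<bar>L z \<tau>\<bar> \<le> C) \<and> (\<forall>z\<in>G. \<bar>gf z\<bar> \<le> C)"
proof -
  define S1 where "S1 = (\<Union>i\<in>{1..N}. (\<lambda>(x, t). l i x t) ` (J_edge (e i) \<times> {0..T}))"
  define S2 where "S2 = ellO N l ls ` {0..T}"
  define S3 where "S3 = (\<Union>i\<in>{1..N}. g i ` J_edge (e i))"
  have "bounded S1" unfolding S1_def using l_bdd by (intro bounded_UN) auto
  moreover have "bounded S2" unfolding S2_def
    by (intro compact_imp_bounded compact_continuous_image ellO_cont) auto
  moreover have "bounded S3" unfolding S3_def using g_bdd by (intro bounded_UN) auto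
  ultimately have "bounded (S1 \<union> S2 \<union> S3 \<union> {gO N g gs})" by auto
  then obtain C where C: "\<forall>x\<in>S1 \<union> S2 \<union> S3 \<union> {gO N g gs}. \<bar>x\<bar> \<le> C"
    unfolding bounded_real by blast
  have L: "L z \<tau> \<in> S1 \<union> S2" if zG: "z \<in> G" and tau: "\<tau> \<in> {0..T}" for z \<tau>
  proof (cases "z = 0")
    case True
    have "ellO N l ls \<tau> \<in> S2" unfolding S2_def using tau by (rule imageI)
    then show ?thesis using True Lrun_zero[of \<tau>] by simp
  next
    case False
    obtain i where i: "i \<in> {1..N}" "z \<in> J_edge (e i)" using zG unfolding G_iff by blast
    have eq: "L z \<tau> = l i z \<tau>" using Lrun_edge[OF i False] .
    have "(z, \<tau>) \<in> J_edge (e i) \<times> {0..T}" using i tau by simp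
    then have "(\<lambda>(x, t). l i x t) (z, \<tau>) \<in> (\<lambda>(x, t). l i x t) ` (J_edge (e i) \<times> {0..T})" by (rule imageI)
    then have "l i z \<tau> \<in> (\<lambda>(x, t). l i x t) ` (J_edge (e i) \<times> {0..T})" by simp
    then have "l i z \<tau> \<in> S1" unfolding S1_def by (rule UN_I[OF i(1)])
    then show ?thesis using eq by simp
  qed
  have g: "gf z \<in> S3 \<union> {gO N g gs}" if zG: "z \<in> G" for z
  proof (cases "z = 0")
    case True
    then show ?thesis unfolding gfin_def by simp
  next
    case False
    obtain i where i: "i \<in> {1..N}" "z \<in> J_edge (e i)" using zG unfolding G_iff by blast
    have "g i z \<in> g i ` J_edge (e i)" using i(2) by (rule imageI)
    then have "g i z \<in> S3" unfolding S3_def by (rule UN_I[OF i(1)])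
    then show ?thesis using gfin_edge[OF i False] by simp
  qed
  have "\<bar>gO N g gs\<bar> \<le> C" using C by blast
  then have "0 \<le> C" by linarith
  moreover have "\<forall>z\<in>G. \<forall>\<tau>\<in>{0..T}. \<bar>L z \<tau>\<bar> \<le> C"
  proof (intro ballI)
    fix z \<tau> assume "z \<in> G" "\<tau> \<in> {0..T}"
    then have "L z \<tau> \<in> S1 \<union> S2 \<union> S3 \<union> {gO N g gs}" using L by blast
    then show "\<bar>L z \<tau>\<bar> \<le> C" using C by blast
  qed
  moreover have "\<forall>z\<in>G. \<bar>gf z\<bar> \<le> C"
  proof (intro ballI)
    fix z assume "z \<in> G"
    then have "gf z \<in> S1 \<union> S2 \<union> S3 \<union> {gO N g gs}" using g by blast
    then show "\<bar>gf z\<bar> \<le> C" using C by blast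
  qed
  ultimately show ?thesis by blast
qed

end


lemma AE_on_neg:
  assumes "AE s in lebesgue_on {p..q::real}. P s"
  shows "\<exists>Nn. negligible Nn \<and> (\<forall>s\<in>{p..q} - Nn. P s)"
proof -
  have "AE s in lebesgue. s \<in> {p..q} \<longrightarrow> P s"
    using assms by (subst (asm) AE_restrict_space_iff) auto
  then obtain Nn where Nn: "{x \<in> space lebesgue. \<not> (x \<in> {p..q} \<longrightarrow> P x)} \<subseteq> Nn"
      "emeasure lebesgue Nn = 0" "Nn \<in> sets lebesgue"
    by (rule AE_E)
  then have "negligible Nn" using negligible_iff_null_sets null_setsI by blast
  then show ?thesis using Nn(1) by (intro exI[of _ Nn]) auto
qed

lemma neg_AE_on:
  assumes "negligible Nn" "\<forall>s\<in>{p..q::real} - Nn. P s"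
  shows "AE s in lebesgue_on {p..q}. P s"
proof -
  have "AE s in lebesgue. s \<in> {p..q} \<longrightarrow> P s"
    by (rule AE_I'[of Nn]) (use assms negligible_iff_null_sets in auto)
  then show ?thesis by (subst AE_restrict_space_iff) auto
qed

lemma neg_vimage_affine:
  fixes c k :: real
  assumes "k \<noteq> 0" "negligible Nn"
  shows "negligible {s. c + k * s \<in> Nn}"
proof -
  define \<psi> where "\<psi> = (\<lambda>x::real. (x - c) / k)"
  have "negligible (\<psi> ` Nn)"
  proof (rule negligible_locally_Lipschitz_image[OF _ assms(2)])
    fix x assume "x \<in> Nn"
    show "\<exists>T B. open T \<and> x \<in> T \<and> (\<forall>y\<in>Nn \<inter> T. norm (\<psi> y - \<psi> x) \<le> B * norm (y - x))"
    proof (intro exI[of _ UNIV] exI[of _ "1 / \<bar>k\<bar>"] conjI ballI)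
      fix y assume "y \<in> Nn \<inter> UNIV"
      have "\<psi> y - \<psi> x = (y - x) / k" unfolding \<psi>_def using assms(1) by (simp add: field_simps)
      then show "norm (\<psi> y - \<psi> x) \<le> 1 / \<bar>k\<bar> * norm (y - x)" by (simp add: abs_div)
    qed auto
  qed auto
  moreover have "{s. c + k * s \<in> Nn} \<subseteq> \<psi> ` Nn"
  proof
    fix s assume "s \<in> {s. c + k * s \<in> Nn}"
    moreover have "s = \<psi> (c + k * s)" unfolding \<psi>_def using assms(1) by simp
    ultimately show "s \<in> \<psi> ` Nn" by blast
  qed
  ultimately show ?thesis using negligible_subset by blast
qed

lemma meas_concat:
  fixes f1 f2 :: "real \<Rightarrow> real"
  assumes "f1 \<in> borel_measurable (lebesgue_on {p..q})" "f2 \<in> borel_measurable (lebesgue_on {q..r})"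
    "p \<le> q" "q \<le> r"
  shows "(\<lambda>s. if s \<le> q then f1 s else f2 s) \<in> borel_measurable (lebesgue_on {p..r})"
proof -
  have f2': "f2 \<in> borel_measurable (lebesgue_on {q<..r})"
    by (rule measurable_restrict_mono[OF assms(2)]) auto
  have F1: "(\<lambda>s. if s \<in> {p..q} then f1 s else 0) \<in> borel_measurable lebesgue"
    using assms(1) by (intro borel_measurable_if_I) auto
  have F2: "(\<lambda>s. if s \<in> {q<..r} then f2 s else 0) \<in> borel_measurable lebesgue"
    using f2' by (intro borel_measurable_if_I) auto
  have "(\<lambda>s. (if s \<in> {p..q} then f1 s else 0) + (if s \<in> {q<..r} then f2 s else 0)) \<in> borel_measurable lebesgue"
    using F1 F2 by (rule borel_measurable_add)
  moreover have "(\<lambda>s. (if s \<in> {p..q} then f1 s else 0) + (if s \<in> {q<..r} then f2 s else 0))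
      = (\<lambda>s. if s \<in> {p..r} then (if s \<le> q then f1 s else f2 s) else 0)"
    using assms(3,4) by (auto simp: fun_eq_iff)
  ultimately show ?thesis by (intro borel_measurable_if_D) simp
qed

lemma meas_affine:
  fixes f :: "real \<Rightarrow> real" and c k :: real
  assumes f: "f \<in> borel_measurable (lebesgue_on {a..b})" and k: "k > 0"
  shows "(\<lambda>s. f (c + k * s)) \<in> borel_measurable (lebesgue_on {(a - c) / k..(b - c) / k})"
proof -
  have F: "(\<lambda>s. if s \<in> {a..b} then f s else 0) \<in> borel_measurable lebesgue"
    using f by (intro borel_measurable_if_I) auto
  have phi: "(\<lambda>x::real. c + k * x) \<in> lebesgue \<rightarrow>\<^sub>M lebesgue"
    using lebesgue_affine_measurable[where c="\<lambda>_. k" and t=c] k by simp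
  have "(\<lambda>s. if c + k * s \<in> {a..b} then f (c + k * s) else 0) \<in> borel_measurable lebesgue"
    using measurable_compose[OF phi F] by (simp add: o_def)
  moreover have "\<And>s. (c + k * s \<in> {a..b}) = (s \<in> {(a - c) / k..(b - c) / k})"
    using k by (auto simp: field_simps)
  ultimately show ?thesis by (intro borel_measurable_if_D) simp
qed



lemma integrable_concat:
  fixes f1 f2 :: "real \<Rightarrow> 'b::banach"
  assumes "f1 integrable_on {p..q}" "f2 integrable_on {q..r}" "p \<le> q" "q \<le> r"
  shows "(\<lambda>s. if s \<le> q then f1 s else f2 s) integrable_on {p..r}"
proof (rule Henstock_Kurzweil_Integration.integrable_combine[OF assms(3,4)])
  show "(\<lambda>s. if s \<le> q then f1 s else f2 s) integrable_on {p..q}"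
    by (rule integrable_eq[OF assms(1)]) auto
  show "(\<lambda>s. if s \<le> q then f1 s else f2 s) integrable_on {q..r}"
  proof (rule integrable_spike_finite[of "{q}" _ _ f2])
    show "f2 integrable_on {q..r}" by (rule assms(2))
    fix x assume "x \<in> {q..r} - {q}"
    then show "(if x \<le> q then f1 x else f2 x) = f2 x" by auto
  qed simp
qed

lemma integral_concat1:
  fixes f1 f2 :: "real \<Rightarrow> 'b::banach"
  assumes "s \<le> q"
  shows "integral {p..s} (\<lambda>s. if s \<le> q then f1 s else f2 s) = integral {p..s} f1"
  by (rule integral_cong) (use assms in auto)

lemma integral_concat2:
  fixes f1 f2 :: "real \<Rightarrow> 'b::banach"
  assumes "f1 integrable_on {p..q}" "f2 integrable_on {q..r}" "p \<le> q" "q \<le> s" "s \<le> r"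
  shows "integral {p..s} (\<lambda>s. if s \<le> q then f1 s else f2 s) = integral {p..q} f1 + integral {q..s} f2"
proof -
  let ?f = "\<lambda>s. if s \<le> q then f1 s else f2 s"
  have "?f integrable_on {p..r}" by (rule integrable_concat[OF assms(1,2,3)]) (use assms in linarith)
  then have int: "?f integrable_on {p..s}" by (rule integrable_on_subinterval) (use assms in auto)
  have "integral {p..s} ?f = integral {p..q} ?f + integral {q..s} ?f"
    using Henstock_Kurzweil_Integration.integral_combine[OF assms(3,4) int] by simp
  moreover have "integral {p..q} ?f = integral {p..q} f1" by (rule integral_concat1) simp
  moreover have "integral {q..s} ?f = integral {q..s} f2"
  proof (rule integral_spike[of "{q}"])
    fix x assume "x \<in> {q..s} - {q}"
    then show "f2 x = ?f x" by auto
  qed simp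
  ultimately show ?thesis by simp
qed

context SG
begin

lemma adm_D:
  assumes "admissible N e q p x y \<alpha>"
  shows "\<forall>s\<in>{p..q}. y s \<in> G"
    and "(\<lambda>s. real (fst (\<alpha> s))) \<in> borel_measurable (lebesgue_on {p..q})"
    and "(\<lambda>s. snd (\<alpha> s)) \<in> borel_measurable (lebesgue_on {p..q})"
    and "AE s in lebesgue_on {p..q}. inM N e (y s) (\<alpha> s)"
    and "(\<lambda>s. (snd (\<alpha> s))\<^sup>2) integrable_on {p..q}"
    and "(\<lambda>s. fdyn e (\<alpha> s)) integrable_on {p..q}"
    and "\<forall>s\<in>{p..q}. y s = x + integral {p..s} (\<lambda>\<tau>. fdyn e (\<alpha> \<tau>))"
  using assms unfolding admissible_def by blast+

lemma adm_I:
  assumes "\<forall>s\<in>{p..q}. y s \<in> G"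
    and "(\<lambda>s. real (fst (\<alpha> s))) \<in> borel_measurable (lebesgue_on {p..q})"
    and "(\<lambda>s. snd (\<alpha> s)) \<in> borel_measurable (lebesgue_on {p..q})"
    and "AE s in lebesgue_on {p..q}. inM N e (y s) (\<alpha> s)"
    and "(\<lambda>s. (snd (\<alpha> s))\<^sup>2) integrable_on {p..q}"
    and "(\<lambda>s. fdyn e (\<alpha> s)) integrable_on {p..q}"
    and "\<forall>s\<in>{p..q}. y s = x + integral {p..s} (\<lambda>\<tau>. fdyn e (\<alpha> \<tau>))"
  shows "admissible N e q p x y \<alpha>"
  using assms unfolding admissible_def by blast

lemma adm_concat:
  assumes A1: "admissible N e q p a y1 \<alpha>1" and A2: "admissible N e r q (y1 q) y2 \<alpha>2"
    and pq: "p \<le> q" and qr: "q \<le> r"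
  shows "admissible N e r p a (\<lambda>s. if s \<le> q then y1 s else y2 s) (\<lambda>s. if s \<le> q then \<alpha>1 s else \<alpha>2 s)"
proof -
  let ?y = "\<lambda>s. if s \<le> q then y1 s else y2 s"
  let ?\<alpha> = "\<lambda>s. if s \<le> q then \<alpha>1 s else \<alpha>2 s"
  note a1 = adm_D[OF A1] and a2 = adm_D[OF A2]
  have 1: "\<forall>s\<in>{p..r}. ?y s \<in> G" using a1(1) a2(1) by auto
  have 2: "(\<lambda>s. real (fst (?\<alpha> s))) \<in> borel_measurable (lebesgue_on {p..r})"
  proof -
    have "(\<lambda>s. if s \<le> q then real (fst (\<alpha>1 s)) else real (fst (\<alpha>2 s))) \<in> borel_measurable (lebesgue_on {p..r})"
      using a1(2) a2(2) pq qr by (intro meas_concat) auto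
    moreover have "(\<lambda>s. real (fst (?\<alpha> s))) = (\<lambda>s. if s \<le> q then real (fst (\<alpha>1 s)) else real (fst (\<alpha>2 s)))"
      by auto
    ultimately show ?thesis by simp
  qed
  have 3: "(\<lambda>s. snd (?\<alpha> s)) \<in> borel_measurable (lebesgue_on {p..r})"
  proof -
    have "(\<lambda>s. if s \<le> q then snd (\<alpha>1 s) else snd (\<alpha>2 s)) \<in> borel_measurable (lebesgue_on {p..r})"
      using a1(3) a2(3) pq qr by (intro meas_concat) auto
    moreover have "(\<lambda>s. snd (?\<alpha> s)) = (\<lambda>s. if s \<le> q then snd (\<alpha>1 s) else snd (\<alpha>2 s))"
      by auto
    ultimately show ?thesis by simp
  qed
  have 4: "AE s in lebesgue_on {p..r}. inM N e (?y s) (?\<alpha> s)"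
  proof -
    obtain N1 where N1: "negligible N1" "\<forall>s\<in>{p..q} - N1. inM N e (y1 s) (\<alpha>1 s)"
      using AE_on_neg[OF a1(4)] by blast
    obtain N2 where N2: "negligible N2" "\<forall>s\<in>{q..r} - N2. inM N e (y2 s) (\<alpha>2 s)"
      using AE_on_neg[OF a2(4)] by blast
    show ?thesis
    proof (rule neg_AE_on[of "N1 \<union> N2"])
      show "negligible (N1 \<union> N2)" using N1 N2 by simp
      show "\<forall>s\<in>{p..r} - (N1 \<union> N2). inM N e (?y s) (?\<alpha> s)"
        using N1(2) N2(2) by auto
    qed
  qed
  have 5: "(\<lambda>s. (snd (?\<alpha> s))\<^sup>2) integrable_on {p..r}"
  proof -
    have "(\<lambda>s. if s \<le> q then (snd (\<alpha>1 s))\<^sup>2 else (snd (\<alpha>2 s))\<^sup>2) integrable_on {p..r}"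
      using a1(5) a2(5) pq qr by (intro integrable_concat) auto
    moreover have "(\<lambda>s. (snd (?\<alpha> s))\<^sup>2) = (\<lambda>s. if s \<le> q then (snd (\<alpha>1 s))\<^sup>2 else (snd (\<alpha>2 s))\<^sup>2)"
      by auto
    ultimately show ?thesis by simp
  qed
  have fe: "(\<lambda>s. fdyn e (?\<alpha> s)) = (\<lambda>s. if s \<le> q then fdyn e (\<alpha>1 s) else fdyn e (\<alpha>2 s))"
    by auto
  have 6: "(\<lambda>s. fdyn e (?\<alpha> s)) integrable_on {p..r}"
    unfolding fe using a1(6) a2(6) pq qr by (intro integrable_concat) auto
  have 7: "\<forall>s\<in>{p..r}. ?y s = a + integral {p..s} (\<lambda>\<tau>. fdyn e (?\<alpha> \<tau>))"
  proof
    fix s assume s: "s \<in> {p..r}"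
    show "?y s = a + integral {p..s} (\<lambda>\<tau>. fdyn e (?\<alpha> \<tau>))"
    proof (cases "s \<le> q")
      case True
      have "integral {p..s} (\<lambda>\<tau>. if \<tau> \<le> q then fdyn e (\<alpha>1 \<tau>) else fdyn e (\<alpha>2 \<tau>)) = integral {p..s} (\<lambda>\<tau>. fdyn e (\<alpha>1 \<tau>))"
        by (rule integral_concat1[OF True])
      then show ?thesis unfolding fe using a1(7) s True by auto
    next
      case False
      have "integral {p..s} (\<lambda>\<tau>. fdyn e (?\<alpha> \<tau>)) =
          integral {p..q} (\<lambda>\<tau>. fdyn e (\<alpha>1 \<tau>)) + integral {q..s} (\<lambda>\<tau>. fdyn e (\<alpha>2 \<tau>))"
        unfolding fe using False s a1(6) a2(6) pq by (intro integral_concat2[where r=r]) auto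
      moreover have "y1 q = a + integral {p..q} (\<lambda>\<tau>. fdyn e (\<alpha>1 \<tau>))" using a1(7) pq by auto
      moreover have "y2 s = y1 q + integral {q..s} (\<lambda>\<tau>. fdyn e (\<alpha>2 \<tau>))" using a2(7) False s by auto
      ultimately show ?thesis using False by simp
    qed
  qed
  show ?thesis using 1 2 3 4 5 6 7 by (rule adm_I)
qed

lemma adm_seg:
  assumes i: "i \<in> {1..N}" and a: "a \<in> J_edge (e i)" and b: "b \<in> J_edge (e i)" and pq: "p < q"
  shows "admissible N e q p a (\<lambda>s. a + ((s - p) / (q - p)) *\<^sub>R (b - a))
           (\<lambda>s. (i, (norm b - norm a) / (q - p)))"
proof -
  let ?v = "(norm b - norm a) / (q - p)"
  have i0: "i \<noteq> 0" "i \<le> N" "1 \<le> i" using i by auto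
  have ba: "b - a = (norm b - norm a) *\<^sub>R e i"
    using J_norm[OF i a] J_norm[OF i b] by (metis scaleR_left_diff_distrib)
  have fd: "fdyn e (i, ?v) = ?v *\<^sub>R e i" unfolding fdyn_def using i0 by simp
  have inJ: "a + ((s - p) / (q - p)) *\<^sub>R (b - a) \<in> J_edge (e i)" if "s \<in> {p..q}" for s
    using that pq by (intro J_seg[OF i a b]) (auto simp: divide_simps)
  have 1: "\<forall>s\<in>{p..q}. a + ((s - p) / (q - p)) *\<^sub>R (b - a) \<in> G"
    using inJ J_sub_G[OF i] by blast
  have 4: "AE s in lebesgue_on {p..q}. inM N e (a + ((s - p) / (q - p)) *\<^sub>R (b - a)) (i, ?v)"
    by (rule AE_I2) (use inJ i0 in \<open>auto simp: inM_def\<close>)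
  have 7: "\<forall>s\<in>{p..q}. a + ((s - p) / (q - p)) *\<^sub>R (b - a) = a + integral {p..s} (\<lambda>\<tau>. fdyn e (i, ?v))"
  proof
    fix s assume s: "s \<in> {p..q}"
    have "integral {p..s} (\<lambda>\<tau>. fdyn e (i, ?v)) = (s - p) *\<^sub>R (?v *\<^sub>R e i)"
      using s by (simp add: fd)
    also have "\<dots> = ((s - p) / (q - p)) *\<^sub>R (b - a)"
      unfolding ba by simp
    finally show "a + ((s - p) / (q - p)) *\<^sub>R (b - a) = a + integral {p..s} (\<lambda>\<tau>. fdyn e (i, ?v))" by simp
  qed
  show ?thesis by (rule adm_I[OF 1 _ _ 4 _ _ 7]) auto
qed

end


lemma affine_int:
  fixes f :: "real \<Rightarrow> 'b::banach" and c k :: real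
  assumes "(f has_integral I) {a..b}" "k > 0"
  shows "((\<lambda>s. f (c + k * s)) has_integral (I /\<^sub>R k)) {(a - c) / k..(b - c) / k}"
proof -
  have "((\<lambda>x. f (k *\<^sub>R x + c)) has_integral (I /\<^sub>R k ^ DIM(real))) (cbox ((a - c) /\<^sub>R k) ((b - c) /\<^sub>R k))"
    using assms by (intro has_integral_affinity') (auto simp: cbox_interval)
  then show ?thesis by (simp add: cbox_interval add.commute divide_inverse_commute)
qed

lemma affine_integral:
  fixes f :: "real \<Rightarrow> 'b::banach" and c k :: real
  assumes "f integrable_on {a..b}" "k > 0"
  shows "(\<lambda>s. f (c + k * s)) integrable_on {(a - c) / k..(b - c) / k}"
    and "integral {(a - c) / k..(b - c) / k} (\<lambda>s. f (c + k * s)) = integral {a..b} f /\<^sub>R k"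
  using affine_int[OF integrable_integral[OF assms(1)] assms(2), of c] 
  by (auto simp: integrable_on_def integral_unique)

context SG
begin

lemma adm_rescale:
  assumes A: "admissible N e T t1 x y \<alpha>" and t1: "t1 < T" and p: "p < T"
  defines "k \<equiv> (T - t1) / (T - p)"
  shows "admissible N e T p x (\<lambda>s. y (t1 + k * (s - p)))
           (\<lambda>s. (fst (\<alpha> (t1 + k * (s - p))), k * snd (\<alpha> (t1 + k * (s - p)))))"
proof -
  note a = adm_D[OF A]
  define c where "c = t1 - k * p"
  have k: "k > 0" unfolding k_def using t1 p by simp
  have phi: "t1 + k * (s - p) = c + k * s" for s unfolding c_def by (simp add: algebra_simps)
  have ep1: "(t1 - c) / k = p" unfolding c_def using k by simp
  have kk: "k * (T - p) = T - t1" unfolding k_def using p by simp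
  have "T - c = k * T" unfolding c_def using kk by (simp add: algebra_simps)
  then have ep2: "(T - c) / k = T" using k by simp
  have ep3: "(c + k * s - c) / k = s" for s using k by simp
  have rng: "c + k * s \<in> {t1..T}" if "s \<in> {p..T}" for s
  proof -
    have "t1 \<le> c + k * s" using that k unfolding c_def by (simp add: algebra_simps)
    moreover have "c + k * s \<le> T"
    proof -
      have "c + k * s \<le> c + k * T" using that k by simp
      also have "c + k * T = T" using ep2 k by (simp add: field_simps)
      finally show ?thesis .
    qed
    ultimately show ?thesis by simp
  qed
  let ?y = "\<lambda>s. y (c + k * s)"
  let ?\<alpha> = "\<lambda>s. (fst (\<alpha> (c + k * s)), k * snd (\<alpha> (c + k * s)))"
  have 1: "\<forall>s\<in>{p..T}. ?y s \<in> G" using a(1) rng by blast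
  have 2: "(\<lambda>s. real (fst (?\<alpha> s))) \<in> borel_measurable (lebesgue_on {p..T})"
    using meas_affine[OF a(2) k, of c] unfolding ep1 ep2 by simp
  have 3: "(\<lambda>s. snd (?\<alpha> s)) \<in> borel_measurable (lebesgue_on {p..T})"
  proof -
    have "(\<lambda>s. snd (\<alpha> (c + k * s))) \<in> borel_measurable (lebesgue_on {p..T})"
      using meas_affine[OF a(3) k, of c] unfolding ep1 ep2 by simp
    then show ?thesis by simp
  qed
  have 4: "AE s in lebesgue_on {p..T}. inM N e (?y s) (?\<alpha> s)"
  proof -
    obtain N1 where N1: "negligible N1" "\<forall>s\<in>{t1..T} - N1. inM N e (y s) (\<alpha> s)"
      using AE_on_neg[OF a(4)] by blast
    show ?thesis
    proof (rule neg_AE_on[of "{s. c + k * s \<in> N1}"])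
      show "negligible {s. c + k * s \<in> N1}" using neg_vimage_affine k N1(1) by simp
      show "\<forall>s\<in>{p..T} - {s. c + k * s \<in> N1}. inM N e (?y s) (?\<alpha> s)"
      proof
        fix s assume s: "s \<in> {p..T} - {s. c + k * s \<in> N1}"
        then have "inM N e (y (c + k * s)) (\<alpha> (c + k * s))" using N1(2) rng by blast
        then show "inM N e (?y s) (?\<alpha> s)" unfolding inM_def by simp
      qed
    qed
  qed
  have 5: "(\<lambda>s. (snd (?\<alpha> s))\<^sup>2) integrable_on {p..T}"
  proof -
    have "(\<lambda>s. (snd (\<alpha> (c + k * s)))\<^sup>2) integrable_on {p..T}"
      using affine_integral(1)[OF a(5) k, of c] unfolding ep1 ep2 .
    then have "(\<lambda>s. k\<^sup>2 *\<^sub>R (snd (\<alpha> (c + k * s)))\<^sup>2) integrable_on {p..T}"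
      by (rule integrable_cmul)
    then show ?thesis by (simp add: power_mult_distrib)
  qed
  have fd: "fdyn e (?\<alpha> s) = k *\<^sub>R fdyn e (\<alpha> (c + k * s))" for s
    unfolding fdyn_def by simp
  have 6: "(\<lambda>s. fdyn e (?\<alpha> s)) integrable_on {p..T}"
  proof -
    have "(\<lambda>s. fdyn e (\<alpha> (c + k * s))) integrable_on {p..T}"
      using affine_integral(1)[OF a(6) k, of c] unfolding ep1 ep2 .
    then show ?thesis unfolding fd by (rule integrable_cmul)
  qed
  have 7: "\<forall>s\<in>{p..T}. ?y s = x + integral {p..s} (\<lambda>\<tau>. fdyn e (?\<alpha> \<tau>))"
  proof
    fix s assume s: "s \<in> {p..T}"
    have int: "(\<lambda>\<tau>. fdyn e (\<alpha> \<tau>)) integrable_on {t1..c + k * s}"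
      by (rule integrable_on_subinterval[OF a(6)]) (use rng[OF s] in auto)
    have "integral {p..s} (\<lambda>\<tau>. fdyn e (?\<alpha> \<tau>)) = k *\<^sub>R integral {p..s} (\<lambda>\<tau>. fdyn e (\<alpha> (c + k * \<tau>)))"
      unfolding fd by simp
    also have "integral {p..s} (\<lambda>\<tau>. fdyn e (\<alpha> (c + k * \<tau>))) = integral {t1..c + k * s} (\<lambda>\<tau>. fdyn e (\<alpha> \<tau>)) /\<^sub>R k"
      using affine_integral(2)[OF int k, of c] unfolding ep1 ep3 .
    finally have "integral {p..s} (\<lambda>\<tau>. fdyn e (?\<alpha> \<tau>)) = integral {t1..c + k * s} (\<lambda>\<tau>. fdyn e (\<alpha> \<tau>))"
      using k by simp
    moreover have "y (c + k * s) = x + integral {t1..c + k * s} (\<lambda>\<tau>. fdyn e (\<alpha> \<tau>))"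
      using a(7) rng[OF s] by blast
    ultimately show "?y s = x + integral {p..s} (\<lambda>\<tau>. fdyn e (?\<alpha> \<tau>))" by simp
  qed
  have "admissible N e T p x ?y ?\<alpha>" using 1 2 3 4 5 6 7 by (rule adm_I)
  then show ?thesis unfolding phi .
qed

end


lemma meas_if_in:
  fixes y :: "real \<Rightarrow> 'a::euclidean_space" and f :: "real \<Rightarrow> real"
  assumes "y \<in> borel_measurable M" "S \<in> sets borel" "f \<in> borel_measurable M"
  shows "(\<lambda>\<tau>. if y \<tau> \<in> S then f \<tau> else 0) \<in> borel_measurable M"
proof (rule measurable_If[OF assms(3)])
  show "(\<lambda>x. 0) \<in> borel_measurable M" by simp
  have "{x \<in> space M. y x \<in> S} = y -` S \<inter> space M" by auto
  then show "{x \<in> space M. y x \<in> S} \<in> sets M" using measurable_sets[OF assms(1,2)] by simp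
qed

context SG
begin

lemma adm_cont:
  assumes A: "admissible N e q p x y \<alpha>"
  shows "continuous_on {p..q} y"
proof -
  note a = adm_D[OF A]
  have "continuous_on {p..q} (\<lambda>s. x + integral {p..s} (\<lambda>\<tau>. fdyn e (\<alpha> \<tau>)))"
    by (intro continuous_intros indefinite_integral_continuous_1 a(6))
  then show ?thesis by (rule continuous_on_eq) (use a(7) in auto)
qed

lemma abs_le_sq: "\<bar>a::real\<bar> \<le> (1 + a\<^sup>2) / 2"
proof -
  have "0 \<le> (\<bar>a\<bar> - 1)\<^sup>2" by simp
  then show ?thesis by (simp add: power2_eq_square algebra_simps)
qed

lemma adm_bound:
  assumes A: "admissible N e q p x y \<alpha>" and s: "s \<in> {p..q}"
  shows "norm (y s - x) \<le> ((q - p) + integral {p..q} (\<lambda>\<tau>. (snd (\<alpha> \<tau>))\<^sup>2)) / 2"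
proof -
  note a = adm_D[OF A]
  obtain Nn where Nn: "negligible Nn" "\<forall>s\<in>{p..q} - Nn. inM N e (y s) (\<alpha> s)"
    using AE_on_neg[OF a(4)] by blast
  define F where "F = (\<lambda>\<tau>. if \<tau> \<in> Nn then 0 else fdyn e (\<alpha> \<tau>))"
  define g where "g = (\<lambda>\<tau>. (1 + (snd (\<alpha> \<tau>))\<^sup>2) / 2)"
  have sub: "{p..s} \<subseteq> {p..q}" using s by auto
  have intf: "(\<lambda>\<tau>. fdyn e (\<alpha> \<tau>)) integrable_on {p..s}"
    by (rule integrable_on_subinterval[OF a(6) sub])
  have eqF: "integral {p..s} (\<lambda>\<tau>. fdyn e (\<alpha> \<tau>)) = integral {p..s} F"
    by (rule integral_spike[OF Nn(1)]) (auto simp: F_def)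
  have intF: "F integrable_on {p..s}"
    by (rule integrable_spike[OF intf Nn(1)]) (auto simp: F_def)
  have int2: "(\<lambda>\<tau>. (snd (\<alpha> \<tau>))\<^sup>2) integrable_on {p..s}"
    by (rule integrable_on_subinterval[OF a(5) sub])
  have intg: "g integrable_on {p..s}"
  proof -
    have "(\<lambda>\<tau>. (1/2) *\<^sub>R (1 + (snd (\<alpha> \<tau>))\<^sup>2)) integrable_on {p..s}"
      by (intro integrable_cmul Henstock_Kurzweil_Integration.integrable_add int2 integrable_const_ivl)
    then show ?thesis unfolding g_def by simp
  qed
  have bnd: "norm (F \<tau>) \<le> g \<tau>" if "\<tau> \<in> {p..s}" for \<tau>
  proof (cases "\<tau> \<in> Nn")
    case True
    then show ?thesis unfolding F_def g_def by (simp add: add_nonneg_nonneg)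
  next
    case False
    then have "inM N e (y \<tau>) (\<alpha> \<tau>)" using Nn(2) that sub by blast
    then have "fst (\<alpha> \<tau>) = 0 \<or> fst (\<alpha> \<tau>) \<in> {1..N}" unfolding inM_def by auto
    then have "norm (fdyn e (\<alpha> \<tau>)) \<le> \<bar>snd (\<alpha> \<tau>)\<bar>"
    proof
      assume "fst (\<alpha> \<tau>) = 0"
      then show ?thesis unfolding fdyn_def by simp
    next
      assume "fst (\<alpha> \<tau>) \<in> {1..N}"
      then have "norm (e (fst (\<alpha> \<tau>))) = 1" "fst (\<alpha> \<tau>) \<noteq> 0" using unit' by auto
      then show ?thesis unfolding fdyn_def by simp
    qed
    then show ?thesis unfolding F_def g_def using False abs_le_sq[of "snd (\<alpha> \<tau>)"] by simp
  qed
  have "norm (y s - x) = norm (integral {p..s} F)" using a(7) s eqF by simp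
  also have "\<dots> \<le> integral {p..s} g"
    by (rule Henstock_Kurzweil_Integration.integral_norm_bound_integral[OF intF intg bnd])
  also have "integral {p..s} g = ((s - p) + integral {p..s} (\<lambda>\<tau>. (snd (\<alpha> \<tau>))\<^sup>2)) / 2"
  proof -
    have "g = (\<lambda>\<tau>. (1/2) *\<^sub>R (1 + (snd (\<alpha> \<tau>))\<^sup>2))" unfolding g_def by auto
    then have "integral {p..s} g = (1/2) *\<^sub>R integral {p..s} (\<lambda>\<tau>. 1 + (snd (\<alpha> \<tau>))\<^sup>2)"
      by (simp only: integral_cmul)
    also have "integral {p..s} (\<lambda>\<tau>. 1 + (snd (\<alpha> \<tau>))\<^sup>2) = (s - p) + integral {p..s} (\<lambda>\<tau>. (snd (\<alpha> \<tau>))\<^sup>2)"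
      using Henstock_Kurzweil_Integration.integral_add[OF integrable_const_ivl int2] s by simp
    finally show ?thesis by simp
  qed
  also have "\<dots> \<le> ((q - p) + integral {p..q} (\<lambda>\<tau>. (snd (\<alpha> \<tau>))\<^sup>2)) / 2"
  proof -
    have "integral {p..s} (\<lambda>\<tau>. (snd (\<alpha> \<tau>))\<^sup>2) \<le> integral {p..q} (\<lambda>\<tau>. (snd (\<alpha> \<tau>))\<^sup>2)"
      by (rule integral_subset_le[OF sub int2 a(5)]) simp
    then show ?thesis using s by simp
  qed
  finally show ?thesis .
qed

end


context SG
begin

definition Pj :: "nat \<Rightarrow> 'a \<Rightarrow> 'a" where "Pj i z = max 0 (z \<bullet> e i) *\<^sub>R e i"

lemma Pj_J: "Pj i z \<in> J_edge (e i)"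
  unfolding Pj_def by (rule J_scale) simp

lemma Pj_id: assumes "i \<in> {1..N}" "z \<in> J_edge (e i)" shows "Pj i z = z"
proof -
  have z: "z = norm z *\<^sub>R e i" using J_norm assms by blast
  have "e i \<bullet> e i = 1" using unit'[OF assms(1)] by (simp add: dot_square_norm)
  then have "z \<bullet> e i = norm z" by (subst z) simp
  then show ?thesis unfolding Pj_def using z by simp
qed

lemma Pj_cont: "continuous_on S (Pj i)"
  unfolding Pj_def[abs_def] by (intro continuous_intros)

lemma adm_int_L:
  assumes A: "admissible N e q p x y \<alpha>" and p0: "0 \<le> p" and qT: "q \<le> T"
  shows "(\<lambda>\<tau>. L (y \<tau>) \<tau>) integrable_on {p..q}"
proof -
  note a = adm_D[OF A]
  have yc: "continuous_on {p..q} y" by (rule adm_cont[OF A])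
  have ym: "y \<in> borel_measurable (lebesgue_on {p..q})"
    by (rule continuous_imp_measurable_on_sets_lebesgue[OF yc]) simp
  define F where "F i \<tau> = l i (Pj i (y \<tau>)) \<tau>" for i \<tau>
  have Fc: "continuous_on {p..q} (F i)" if i: "i \<in> {1..N}" for i
  proof -
    have lc: "continuous_on (J_edge (e i) \<times> {0..T}) (\<lambda>(x, t). l i x t)" using l_cont i by blast
    have c1: "continuous_on {p..q} (\<lambda>\<tau>. Pj i (y \<tau>))"
      by (rule continuous_on_compose2[OF Pj_cont[of UNIV] yc]) simp
    have c2: "continuous_on {p..q} (\<lambda>\<tau>. (Pj i (y \<tau>), \<tau>))"
      by (rule continuous_on_Pair[OF c1 continuous_on_id])
    have sub: "(\<lambda>\<tau>. (Pj i (y \<tau>), \<tau>)) ` {p..q} \<subseteq> J_edge (e i) \<times> {0..T}"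
      using Pj_J p0 qT by auto
    have "continuous_on {p..q} (\<lambda>\<tau>. (\<lambda>(x, t). l i x t) (Pj i (y \<tau>), \<tau>))"
      by (rule continuous_on_compose2[OF lc c2 sub])
    then show ?thesis unfolding F_def by simp
  qed
  define H where "H \<tau> = (if y \<tau> \<in> {0} then ellO N l ls \<tau> else 0) +
      (\<Sum>i\<in>{1..N}. if y \<tau> \<in> J_edge (e i) - {0} then F i \<tau> else 0)" for \<tau>
  have Hm: "H \<in> borel_measurable (lebesgue_on {p..q})"
  proof -
    have em: "ellO N l ls \<in> borel_measurable (lebesgue_on {p..q})"
      by (rule continuous_imp_measurable_on_sets_lebesgue)
         (use continuous_on_subset[OF ellO_cont] p0 qT in auto)
    have s0: "{0::'a} \<in> sets borel" by (intro borel_closed) simp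
    have sJ: "J_edge (e i) - {0} \<in> sets borel" for i
      using J_closed[of "e i"] s0 by (intro sets.Diff borel_closed) auto
    have "(\<lambda>\<tau>. if y \<tau> \<in> {0} then ellO N l ls \<tau> else 0) \<in> borel_measurable (lebesgue_on {p..q})"
      by (rule meas_if_in[OF ym s0 em])
    moreover have "(\<lambda>\<tau>. \<Sum>i\<in>{1..N}. if y \<tau> \<in> J_edge (e i) - {0} then F i \<tau> else 0) \<in> borel_measurable (lebesgue_on {p..q})"
    proof (rule borel_measurable_sum)
      fix i assume i: "i \<in> {1..N}"
      have "F i \<in> borel_measurable (lebesgue_on {p..q})"
        by (rule continuous_imp_measurable_on_sets_lebesgue[OF Fc[OF i]]) simp
      then show "(\<lambda>\<tau>. if y \<tau> \<in> J_edge (e i) - {0} then F i \<tau> else 0) \<in> borel_measurable (lebesgue_on {p..q})"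
        by (rule meas_if_in[OF ym sJ])
    qed
    ultimately show ?thesis unfolding H_def[abs_def] by (rule borel_measurable_add)
  qed
  have HL: "H \<tau> = L (y \<tau>) \<tau>" if t: "\<tau> \<in> {p..q}" for \<tau>
  proof (cases "y \<tau> = 0")
    case True
    then show ?thesis unfolding H_def by (simp add: Lrun_zero)
  next
    case False
    have "y \<tau> \<in> G" using a(1) t by blast
    then obtain j where j: "j \<in> {1..N}" "y \<tau> \<in> J_edge (e j)" unfolding G_iff by blast
    have "(\<Sum>i\<in>{1..N}. if y \<tau> \<in> J_edge (e i) - {0} then F i \<tau> else 0)
        = (\<Sum>i\<in>{1..N}. if i = j then F j \<tau> else 0)"
    proof (rule sum.cong)
      fix i assume i: "i \<in> {1..N}"
      show "(if y \<tau> \<in> J_edge (e i) - {0} then F i \<tau> else 0) = (if i = j then F j \<tau> else 0)"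
      proof (cases "y \<tau> \<in> J_edge (e i)")
        case True
        have "i = j" by (rule J_uniq[OF i j(1) True j(2) False])
        then show ?thesis using True False by simp
      next
        case nJ: False
        then have "i \<noteq> j" using j(2) by blast
        then show ?thesis using nJ by simp
      qed
    qed simp
    also have "\<dots> = F j \<tau>" using j(1) by simp
    also have "\<dots> = l j (y \<tau>) \<tau>" unfolding F_def using Pj_id[OF j] by simp
    also have "\<dots> = L (y \<tau>) \<tau>" using Lrun_edge[OF j False] by simp
    finally show ?thesis unfolding H_def using False by simp
  qed
  obtain C where C: "C \<ge> 0" "\<forall>z\<in>G. \<forall>\<tau>\<in>{0..T}. \<bar>L z \<tau>\<bar> \<le> C" using bounds by blast
  have "H integrable_on {p..q}"
  proof (rule measurable_bounded_by_integrable_imp_integrable_real[OF Hm])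
    show "(\<lambda>_. C) integrable_on {p..q}" by (rule integrable_const_ivl)
    fix \<tau> assume t: "\<tau> \<in> {p..q}"
    have "y \<tau> \<in> G" "\<tau> \<in> {0..T}" using a(1) t p0 qT by auto
    then show "\<bar>H \<tau>\<bar> \<le> C" using HL[OF t] C(2) by simp
  qed simp
  then show ?thesis by (rule integrable_eq) (use HL in auto)
qed

end


context SG
begin

definition CB :: real where
  "CB = (SOME C. C \<ge> 0 \<and> (\<forall>z\<in>G. \<forall>\<tau>\<in>{0..T}. \<bar>L z \<tau>\<bar> \<le> C) \<and> (\<forall>z\<in>G. \<bar>gf z\<bar> \<le> C))"

lemma CB: "CB \<ge> 0" "\<And>z \<tau>. z \<in> G \<Longrightarrow> \<tau> \<in> {0..T} \<Longrightarrow> \<bar>L z \<tau>\<bar> \<le> CB" "\<And>z. z \<in> G \<Longrightarrow> \<bar>gf z\<bar> \<le> CB"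
proof -
  have "CB \<ge> 0 \<and> (\<forall>z\<in>G. \<forall>\<tau>\<in>{0..T}. \<bar>L z \<tau>\<bar> \<le> CB) \<and> (\<forall>z\<in>G. \<bar>gf z\<bar> \<le> CB)"
    unfolding CB_def by (rule someI_ex) (rule bounds)
  then show "CB \<ge> 0" "\<And>z \<tau>. z \<in> G \<Longrightarrow> \<tau> \<in> {0..T} \<Longrightarrow> \<bar>L z \<tau>\<bar> \<le> CB" "\<And>z. z \<in> G \<Longrightarrow> \<bar>gf z\<bar> \<le> CB"
    by blast+
qed

abbreviation "cst t y \<alpha> \<equiv> cost N e l ls g gs T t y \<alpha>"
abbreviation "u x t \<equiv> value_fun N e l ls g gs T x t"

lemma cost_split:
  assumes A: "admissible N e T t x y \<alpha>" and t: "0 \<le> t"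
  shows "cst t y \<alpha> = integral {t..T} (\<lambda>\<tau>. L (y \<tau>) \<tau>) + integral {t..T} (\<lambda>\<tau>. (snd (\<alpha> \<tau>))\<^sup>2) / 2 + gf (y T)"
proof -
  have i1: "(\<lambda>\<tau>. L (y \<tau>) \<tau>) integrable_on {t..T}" by (rule adm_int_L[OF A t]) simp
  have i2: "(\<lambda>\<tau>. (1/2) *\<^sub>R (snd (\<alpha> \<tau>))\<^sup>2) integrable_on {t..T}" by (rule integrable_cmul[OF adm_D(5)[OF A]])
  have "integral {t..T} (\<lambda>\<tau>. L (y \<tau>) \<tau> + (snd (\<alpha> \<tau>))\<^sup>2 / 2)
      = integral {t..T} (\<lambda>\<tau>. L (y \<tau>) \<tau> + (1/2) *\<^sub>R (snd (\<alpha> \<tau>))\<^sup>2)" by simp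
  also have "\<dots> = integral {t..T} (\<lambda>\<tau>. L (y \<tau>) \<tau>) + integral {t..T} (\<lambda>\<tau>. (1/2) *\<^sub>R (snd (\<alpha> \<tau>))\<^sup>2)"
    by (rule Henstock_Kurzweil_Integration.integral_add[OF i1 i2])
  also have "integral {t..T} (\<lambda>\<tau>. (1/2) *\<^sub>R (snd (\<alpha> \<tau>))\<^sup>2) = integral {t..T} (\<lambda>\<tau>. (snd (\<alpha> \<tau>))\<^sup>2) / 2"
    by (simp only: integral_cmul) simp
  finally show ?thesis unfolding cost_def by simp
qed

lemma intL_bound:
  assumes A: "admissible N e q p x y \<alpha>" and p: "0 \<le> p" "p \<le> q" "q \<le> T"
  shows "\<bar>integral {p..q} (\<lambda>\<tau>. L (y \<tau>) \<tau>)\<bar> \<le> CB * (q - p)"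
proof -
  have i1: "(\<lambda>\<tau>. L (y \<tau>) \<tau>) integrable_on {p..q}" by (rule adm_int_L[OF A p(1) p(3)])
  have b: "\<bar>L (y \<tau>) \<tau>\<bar> \<le> CB" if "\<tau> \<in> {p..q}" for \<tau>
    using CB(2)[of "y \<tau>" \<tau>] adm_D(1)[OF A] that p by auto
  have "integral {p..q} (\<lambda>\<tau>. L (y \<tau>) \<tau>) \<le> integral {p..q} (\<lambda>\<tau>. CB)"
    by (rule integral_le[OF i1 integrable_const_ivl]) (use b in \<open>fastforce simp: abs_le_iff\<close>)
  moreover have "integral {p..q} (\<lambda>\<tau>. - CB) \<le> integral {p..q} (\<lambda>\<tau>. L (y \<tau>) \<tau>)"
    by (rule integral_le[OF integrable_const_ivl i1]) (use b in \<open>fastforce simp: abs_le_iff\<close>)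
  ultimately show ?thesis using p by (simp add: abs_le_iff algebra_simps)
qed

lemma E_nonneg: "admissible N e q p x y \<alpha> \<Longrightarrow> 0 \<le> integral {p..q} (\<lambda>\<tau>. (snd (\<alpha> \<tau>))\<^sup>2)"
  by (rule integral_nonneg[OF adm_D(5)]) auto

lemma cost_lower:
  assumes A: "admissible N e T t x y \<alpha>" and t: "0 \<le> t" "t \<le> T"
  shows "cst t y \<alpha> \<ge> - CB * T - CB + integral {t..T} (\<lambda>\<tau>. (snd (\<alpha> \<tau>))\<^sup>2) / 2"
proof -
  have "\<bar>integral {t..T} (\<lambda>\<tau>. L (y \<tau>) \<tau>)\<bar> \<le> CB * (T - t)" by (rule intL_bound[OF A t]) simp
  moreover have "CB * (T - t) \<le> CB * T" using CB(1) t by (simp add: mult_left_mono)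
  moreover have "\<bar>gf (y T)\<bar> \<le> CB" using CB(3) adm_D(1)[OF A] t by auto
  ultimately show ?thesis using cost_split[OF A t(1)] by linarith
qed

lemma adm_stat:
  assumes x: "x \<in> G" and t: "0 \<le> t" "t < T"
  shows "\<exists>y \<alpha>. admissible N e T t x y \<alpha> \<and> cst t y \<alpha> \<le> CB * T + CB"
proof -
  obtain i where i: "i \<in> {1..N}" "x \<in> J_edge (e i)" using x unfolding G_iff by blast
  have A0: "admissible N e T t x (\<lambda>s. x + ((s - t) / (T - t)) *\<^sub>R (x - x)) (\<lambda>s. (i, (norm x - norm x) / (T - t)))"
    by (rule adm_seg[OF i(1) i(2) i(2) t(2)])
  then have A: "admissible N e T t x (\<lambda>s. x) (\<lambda>s. (i, 0))" by simp
  have "\<bar>integral {t..T} (\<lambda>\<tau>. L x \<tau>)\<bar> \<le> CB * (T - t)" using intL_bound[OF A t(1)] t by simp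
  moreover have "CB * (T - t) \<le> CB * T" using CB(1) t by (simp add: mult_left_mono)
  moreover have "\<bar>gf x\<bar> \<le> CB" using CB(3) x by auto
  ultimately have "cst t (\<lambda>s. x) (\<lambda>s. (i, 0)) \<le> CB * T + CB"
    using cost_split[OF A t(1)] by simp
  then show ?thesis using A by blast
qed

lemma u_props:
  assumes x: "x \<in> G" and t: "0 \<le> t" "t < T"
  shows "\<And>y \<alpha>. admissible N e T t x y \<alpha> \<Longrightarrow> u x t \<le> cst t y \<alpha>"
    and "u x t \<le> CB * T + CB"
    and "\<And>\<epsilon>. \<epsilon> > 0 \<Longrightarrow> \<exists>y \<alpha>. admissible N e T t x y \<alpha> \<and> cst t y \<alpha> < u x t + \<epsilon>"
proof -
  define S where "S = {cst t y \<alpha> | y \<alpha>. admissible N e T t x y \<alpha>}"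
  have u: "u x t = Inf S" unfolding S_def value_fun_def ..
  obtain y0 \<alpha>0 where y0: "admissible N e T t x y0 \<alpha>0" "cst t y0 \<alpha>0 \<le> CB * T + CB"
    using adm_stat[OF x t] by blast
  have ne: "S \<noteq> {}" unfolding S_def using y0 by blast
  have bdd: "bdd_below S"
  proof (rule bdd_belowI)
    fix c assume "c \<in> S"
    then obtain y \<alpha> where ya: "c = cst t y \<alpha>" "admissible N e T t x y \<alpha>" unfolding S_def by blast
    show "- CB * T - CB \<le> c"
      using cost_lower[OF ya(2) t(1)] E_nonneg[OF ya(2)] ya(1) t by simp
  qed
  show lo: "u x t \<le> cst t y \<alpha>" if "admissible N e T t x y \<alpha>" for y \<alpha>
  proof -
    have "cst t y \<alpha> \<in> S" unfolding S_def using that by blast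
    then show ?thesis unfolding u by (rule cInf_lower[OF _ bdd])
  qed
  show "u x t \<le> CB * T + CB" using lo[OF y0(1)] y0(2) by simp
  show "\<exists>y \<alpha>. admissible N e T t x y \<alpha> \<and> cst t y \<alpha> < u x t + \<epsilon>" if "\<epsilon> > 0" for \<epsilon>
  proof -
    have "Inf S < u x t + \<epsilon>" using u that by simp
    then obtain c where "c \<in> S" "c < u x t + \<epsilon>" using cInf_less_iff[OF ne bdd] by blast
    then show ?thesis unfolding S_def by blast
  qed
qed

lemma UC:
  assumes ep: "\<epsilon>' > 0"
  shows "\<exists>\<rho>>0. \<forall>z\<in>G. norm z \<le> R \<longrightarrow> (\<forall>s1\<in>{0..T}. \<forall>s2\<in>{0..T}. \<bar>s1 - s2\<bar> < \<rho> \<longrightarrow> \<bar>L z s1 - L z s2\<bar> \<le> \<epsilon>')"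
proof -
  have "\<forall>i\<in>{1..N}. \<exists>d>0. \<forall>z\<in>J_edge (e i). norm z \<le> R \<longrightarrow> (\<forall>s1\<in>{0..T}. \<forall>s2\<in>{0..T}. \<bar>s1 - s2\<bar> < d \<longrightarrow> \<bar>l i z s1 - l i z s2\<bar> \<le> \<epsilon>')"
  proof
    fix i assume i: "i \<in> {1..N}"
    define K where "K = (cball 0 R \<inter> J_edge (e i)) \<times> {0..T}"
    have Kc: "compact K" unfolding K_def
      by (intro compact_Times compact_Int_closed J_closed) auto
    have lc: "continuous_on K (\<lambda>(x, t). l i x t)"
      using l_cont i by (rule_tac continuous_on_subset[of "J_edge (e i) \<times> {0..T}"]) (auto simp: K_def)
    have "uniformly_continuous_on K (\<lambda>(x, t). l i x t)"
      by (rule compact_uniformly_continuous[OF lc Kc])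
    then obtain d where d: "d > 0" "\<forall>x\<in>K. \<forall>x'\<in>K. dist x' x < d \<longrightarrow> dist ((\<lambda>(x, t). l i x t) x') ((\<lambda>(x, t). l i x t) x) < \<epsilon>'"
      unfolding uniformly_continuous_on_def using ep by blast
    show "\<exists>d>0. \<forall>z\<in>J_edge (e i). norm z \<le> R \<longrightarrow> (\<forall>s1\<in>{0..T}. \<forall>s2\<in>{0..T}. \<bar>s1 - s2\<bar> < d \<longrightarrow> \<bar>l i z s1 - l i z s2\<bar> \<le> \<epsilon>')"
    proof (intro exI[of _ d] conjI ballI impI)
      fix z s1 s2 assume z: "z \<in> J_edge (e i)" "norm z \<le> R" and s: "s1 \<in> {0..T}" "s2 \<in> {0..T}" and ds: "\<bar>s1 - s2\<bar> < d"
      have "(z, s1) \<in> K" "(z, s2) \<in> K" unfolding K_def using z s by auto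
      moreover have "dist (z, s1) (z, s2) < d" using ds by (simp add: dist_Pair_Pair dist_real_def)
      ultimately have "dist (l i z s1) (l i z s2) < \<epsilon>'" using d(2) by fastforce
      then show "\<bar>l i z s1 - l i z s2\<bar> \<le> \<epsilon>'" by (simp add: dist_real_def)
    qed (rule d(1))
  qed
  then obtain d where d: "\<forall>i\<in>{1..N}. d i > 0 \<and> (\<forall>z\<in>J_edge (e i). norm z \<le> R \<longrightarrow> (\<forall>s1\<in>{0..T}. \<forall>s2\<in>{0..T}. \<bar>s1 - s2\<bar> < d i \<longrightarrow> \<bar>l i z s1 - l i z s2\<bar> \<le> \<epsilon>'))"
    by (metis (no_types, lifting) bchoice)
  have "uniformly_continuous_on {0..T} (ellO N l ls)"
    by (rule compact_uniformly_continuous[OF ellO_cont compact_Icc])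
  then obtain d0 where d0: "d0 > 0" "\<forall>x\<in>{0..T}. \<forall>x'\<in>{0..T}. dist x' x < d0 \<longrightarrow> dist (ellO N l ls x') (ellO N l ls x) < \<epsilon>'"
    unfolding uniformly_continuous_on_def using ep by blast
  define \<rho> where "\<rho> = min d0 (Min (d ` {1..N}))"
  have fin: "finite (d ` {1..N})" "d ` {1..N} \<noteq> {}" using N2 by auto
  have "Min (d ` {1..N}) > 0" using fin d by (subst Min_gr_iff) auto
  then have rho: "\<rho> > 0" unfolding \<rho>_def using d0 by simp
  have rho_i: "\<rho> \<le> d i" if "i \<in> {1..N}" for i
  proof -
    have "Min (d ` {1..N}) \<le> d i" using fin that by (intro Min_le) auto
    then show ?thesis unfolding \<rho>_def by simp
  qed
  show ?thesis
  proof (intro exI[of _ \<rho>] conjI ballI impI rho)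
    fix z s1 s2 assume z: "z \<in> G" "norm z \<le> R" and s: "s1 \<in> {0..T}" "s2 \<in> {0..T}" and ds: "\<bar>s1 - s2\<bar> < \<rho>"
    show "\<bar>L z s1 - L z s2\<bar> \<le> \<epsilon>'"
    proof (cases "z = 0")
      case True
      have "dist s1 s2 < d0" using ds unfolding \<rho>_def by (simp add: dist_real_def)
      then have "dist (ellO N l ls s1) (ellO N l ls s2) < \<epsilon>'" using d0(2) s by blast
      then show ?thesis using True by (simp add: Lrun_zero dist_real_def)
    next
      case False
      obtain i where i: "i \<in> {1..N}" "z \<in> J_edge (e i)" using z(1) unfolding G_iff by blast
      have "\<bar>s1 - s2\<bar> < d i" using ds rho_i[OF i(1)] by simp
      then have "\<bar>l i z s1 - l i z s2\<bar> \<le> \<epsilon>'" using d i z(2) s by blast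
      then show ?thesis using Lrun_edge[OF i False] by simp
    qed
  qed
qed

end


lemma abs2: "\<bar>(a::real) * 2 - b * 2\<bar> = 2 * \<bar>a - b\<bar>" by (simp add: abs_if)

context SG
begin

lemma phase2:
  assumes A: "admissible N e T t1 x1 y \<alpha>" and t1: "0 \<le> t1" "t1 < T" and p: "0 \<le> p" "p < T"
    and kdef: "k = (T - t1) / (T - p)"
    and shift: "\<forall>\<tau>\<in>{p..T}. L (y (t1 + k * (\<tau> - p))) \<tau> \<le> L (y (t1 + k * (\<tau> - p))) (t1 + k * (\<tau> - p)) + \<epsilon>'"
  shows "integral {p..T} (\<lambda>\<tau>. L (y (t1 + k * (\<tau> - p))) \<tau> + (k * snd (\<alpha> (t1 + k * (\<tau> - p))))\<^sup>2 / 2)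
      \<le> integral {t1..T} (\<lambda>r. L (y r) r) / k + k * (integral {t1..T} (\<lambda>r. (snd (\<alpha> r))\<^sup>2) / 2) + \<epsilon>' * (T - p)"
proof -
  have A': "admissible N e T p x1 (\<lambda>s. y (t1 + k * (s - p)))
           (\<lambda>s. (fst (\<alpha> (t1 + k * (s - p))), k * snd (\<alpha> (t1 + k * (s - p)))))"
    unfolding kdef by (rule adm_rescale[OF A t1(2) p(2)])
  define c where "c = t1 - k * p"
  have k: "k > 0" unfolding kdef using t1 p by simp
  have phi: "t1 + k * (s - p) = c + k * s" for s unfolding c_def by (simp add: algebra_simps)
  have ep1: "(t1 - c) / k = p" unfolding c_def using k by simp
  have kk: "k * (T - p) = T - t1" unfolding kdef using p by simp
  have "T - c = k * T" unfolding c_def using kk by (simp add: algebra_simps)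
  then have ep2: "(T - c) / k = T" using k by simp
  have i1: "(\<lambda>\<tau>. L (y (t1 + k * (\<tau> - p))) \<tau>) integrable_on {p..T}"
    using adm_int_L[OF A' p(1)] by simp
  have i2: "(\<lambda>\<tau>. (k * snd (\<alpha> (t1 + k * (\<tau> - p))))\<^sup>2 / 2) integrable_on {p..T}"
  proof -
    have "(\<lambda>\<tau>. (1/2) *\<^sub>R (k * snd (\<alpha> (t1 + k * (\<tau> - p))))\<^sup>2) integrable_on {p..T}"
      using integrable_cmul[OF adm_D(5)[OF A'], of "1/2"] by simp
    then show ?thesis by simp
  qed
  have iW: "(\<lambda>\<tau>. L (y (t1 + k * (\<tau> - p))) \<tau> + (k * snd (\<alpha> (t1 + k * (\<tau> - p))))\<^sup>2 / 2) integrable_on {p..T}"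
    by (rule Henstock_Kurzweil_Integration.integrable_add[OF i1 i2])
  define Q where "Q r = L (y r) r + (k * snd (\<alpha> r))\<^sup>2 / 2" for r
  have iL: "(\<lambda>r. L (y r) r) integrable_on {t1..T}" using adm_int_L[OF A t1(1)] by simp
  have iE: "(\<lambda>r. (snd (\<alpha> r))\<^sup>2) integrable_on {t1..T}" by (rule adm_D(5)[OF A])
  have iE2: "(\<lambda>r. (k\<^sup>2 / 2) *\<^sub>R (snd (\<alpha> r))\<^sup>2) integrable_on {t1..T}" by (rule integrable_cmul[OF iE])
  have Qeq: "Q = (\<lambda>r. L (y r) r + (k\<^sup>2 / 2) *\<^sub>R (snd (\<alpha> r))\<^sup>2)"
    unfolding Q_def by (auto simp: power_mult_distrib)
  have iQ: "Q integrable_on {t1..T}" unfolding Qeq by (rule Henstock_Kurzweil_Integration.integrable_add[OF iL iE2])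
  have intQ: "integral {t1..T} Q = integral {t1..T} (\<lambda>r. L (y r) r) + (k\<^sup>2 / 2) * integral {t1..T} (\<lambda>r. (snd (\<alpha> r))\<^sup>2)"
    unfolding Qeq using Henstock_Kurzweil_Integration.integral_add[OF iL iE2] by simp
  have iQphi: "(\<lambda>s. Q (c + k * s)) integrable_on {p..T}"
    using affine_integral(1)[OF iQ k, of c] unfolding ep1 ep2 .
  have intQphi: "integral {p..T} (\<lambda>s. Q (c + k * s)) = integral {t1..T} Q / k"
    using affine_integral(2)[OF iQ k, of c] unfolding ep1 ep2 by (simp add: divide_inverse_commute)
  have "integral {p..T} (\<lambda>\<tau>. L (y (t1 + k * (\<tau> - p))) \<tau> + (k * snd (\<alpha> (t1 + k * (\<tau> - p))))\<^sup>2 / 2)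
      \<le> integral {p..T} (\<lambda>s. Q (c + k * s) + \<epsilon>')"
  proof (rule integral_le[OF iW])
    show "(\<lambda>s. Q (c + k * s) + \<epsilon>') integrable_on {p..T}"
      by (rule Henstock_Kurzweil_Integration.integrable_add[OF iQphi integrable_const_ivl])
    fix \<tau> assume "\<tau> \<in> {p..T}"
    then show "L (y (t1 + k * (\<tau> - p))) \<tau> + (k * snd (\<alpha> (t1 + k * (\<tau> - p))))\<^sup>2 / 2 \<le> Q (c + k * \<tau>) + \<epsilon>'"
      using shift unfolding Q_def phi by force
  qed
  also have "\<dots> = integral {p..T} (\<lambda>s. Q (c + k * s)) + \<epsilon>' * (T - p)"
    using Henstock_Kurzweil_Integration.integral_add[OF iQphi integrable_const_ivl, of \<epsilon>'] p by simp
  also have "integral {p..T} (\<lambda>s. Q (c + k * s)) = integral {t1..T} (\<lambda>r. L (y r) r) / k + k * (integral {t1..T} (\<lambda>r. (snd (\<alpha> r))\<^sup>2) / 2)"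
    unfolding intQphi intQ using k by (simp add: field_simps power2_eq_square)
  finally show ?thesis .
qed

lemma path:
  assumes x1: "x1 \<in> G" and x2: "x2 \<in> G" and pq: "p < q"
  shows "\<exists>y \<alpha>. admissible N e q p x2 y \<alpha> \<and> y q = x1 \<and>
            (\<forall>\<tau>. \<bar>snd (\<alpha> \<tau>)\<bar> \<le> 2 * gdist N e x2 x1 / (q - p))"
proof -
  define m where "m = (p + q) / 2"
  have pm: "p < m" "m < q" "m - p = (q - p) / 2" "q - m = (q - p) / 2" unfolding m_def using pq by (auto simp: field_simps)
  have gen: "\<exists>y \<alpha>. admissible N e q p x2 y \<alpha> \<and> y q = x1 \<and>
            (\<forall>\<tau>. \<bar>snd (\<alpha> \<tau>)\<bar> \<le> 2 * gdist N e x2 x1 / (q - p))"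
    if i: "i \<in> {1..N}" and j: "j \<in> {1..N}" and w: "w \<in> J_edge (e i)" "w \<in> J_edge (e j)"
      and a2: "x2 \<in> J_edge (e i)" and a1: "x1 \<in> J_edge (e j)"
      and d1: "norm (w - x2) \<le> gdist N e x2 x1" and d2: "norm (x1 - w) \<le> gdist N e x2 x1" for i j w
  proof -
    define y1 where "y1 = (\<lambda>s. x2 + ((s - p) / (m - p)) *\<^sub>R (w - x2))"
    define y2 where "y2 = (\<lambda>s. w + ((s - m) / (q - m)) *\<^sub>R (x1 - w))"
    define v1 where "v1 = (norm w - norm x2) / (m - p)"
    define v2 where "v2 = (norm x1 - norm w) / (q - m)"
    have S1: "admissible N e m p x2 y1 (\<lambda>s. (i, v1))"
      unfolding y1_def v1_def by (rule adm_seg[OF i a2 w(1) pm(1)])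
    have S2: "admissible N e q m w y2 (\<lambda>s. (j, v2))"
      unfolding y2_def v2_def by (rule adm_seg[OF j w(2) a1 pm(2)])
    have y1m: "y1 m = w" unfolding y1_def using pm by simp
    have S2': "admissible N e q m (y1 m) y2 (\<lambda>s. (j, v2))" using S2 y1m by simp
    have Y: "admissible N e q p x2 (\<lambda>s. if s \<le> m then y1 s else y2 s) (\<lambda>s. if s \<le> m then (i, v1) else (j, v2))"
      by (rule adm_concat[OF S1 S2']) (use pm in auto)
    have yq: "(\<lambda>s. if s \<le> m then y1 s else y2 s) q = x1" unfolding y2_def using pm by simp
    have "\<bar>v1\<bar> \<le> 2 * gdist N e x2 x1 / (q - p)"
    proof -
      have "\<bar>norm w - norm x2\<bar> \<le> gdist N e x2 x1" using d1 norm_triangle_ineq3[of w x2] by linarith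
      moreover have "\<bar>v1\<bar> = 2 * \<bar>norm w - norm x2\<bar> / (q - p)"
        unfolding v1_def pm(3) using pq by (simp add: abs_div abs2)
      ultimately show ?thesis using pq by (simp add: divide_right_mono)
    qed
    moreover have "\<bar>v2\<bar> \<le> 2 * gdist N e x2 x1 / (q - p)"
    proof -
      have "\<bar>norm x1 - norm w\<bar> \<le> gdist N e x2 x1" using d2 norm_triangle_ineq3[of x1 w] by linarith
      moreover have "\<bar>v2\<bar> = 2 * \<bar>norm x1 - norm w\<bar> / (q - p)"
        unfolding v2_def pm(4) using pq by (simp add: abs_div abs2)
      ultimately show ?thesis using pq by (simp add: divide_right_mono)
    qed
    ultimately have "\<forall>\<tau>. \<bar>snd ((\<lambda>s. if s \<le> m then (i, v1) else (j, v2)) \<tau>)\<bar> \<le> 2 * gdist N e x2 x1 / (q - p)"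
      by simp
    then show ?thesis using Y yq by blast
  qed
  show ?thesis
  proof (cases "\<exists>i\<in>{1..N}. x2 \<in> J_edge (e i) \<and> x1 \<in> J_edge (e i)")
    case True
    then obtain i where i: "i \<in> {1..N}" "x2 \<in> J_edge (e i)" "x1 \<in> J_edge (e i)" by blast
    have gd: "gdist N e x2 x1 = norm (x2 - x1)" unfolding gdist_def using i by auto
    show ?thesis
      by (rule gen[OF i(1) i(1) i(3) i(3) i(2) i(3)]) (auto simp: gd norm_minus_commute)
  next
    case False
    obtain i where i: "i \<in> {1..N}" "x2 \<in> J_edge (e i)" using x2 unfolding G_iff by blast
    obtain j where j: "j \<in> {1..N}" "x1 \<in> J_edge (e j)" using x1 unfolding G_iff by blast
    have gd: "gdist N e x2 x1 = norm x2 + norm x1" unfolding gdist_def using False by auto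
    show ?thesis
      by (rule gen[OF i(1) j(1) zero_J zero_J i(2) j(2)]) (auto simp: gd)
  qed
qed

end


lemma sq_le_of_abs: "\<bar>a::real\<bar> \<le> b \<Longrightarrow> a\<^sup>2 \<le> b\<^sup>2"
  by (metis abs_ge_zero abs_power2 order_trans power_mono power2_abs)

context SG
begin

lemma core_step:
  assumes x1: "x1 \<in> G" and x2: "x2 \<in> G"
    and t1: "0 \<le> t1" "t1 \<le> T - \<eta>" and t2: "0 \<le> t2" "t2 \<le> T - \<eta>" and eta: "0 < \<eta>"
    and h: "0 < h" "h \<le> \<eta> / 2" and dt: "\<bar>t1 - t2\<bar> < h"
    and A: "admissible N e T t1 x1 y \<alpha>"
    and E: "integral {t1..T} (\<lambda>r. (snd (\<alpha> r))\<^sup>2) \<le> E0"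
    and nx: "norm x1 \<le> R" and ep: "\<epsilon>' \<ge> 0"
    and UCh: "\<forall>z\<in>G. norm z \<le> R + (T + E0) / 2 \<longrightarrow> (\<forall>s1\<in>{0..T}. \<forall>s2\<in>{0..T}. \<bar>s1 - s2\<bar> < 2 * h \<longrightarrow> \<bar>L z s1 - L z s2\<bar> \<le> \<epsilon>')"
  shows "\<exists>y' \<alpha>'. admissible N e T t2 x2 y' \<alpha>' \<and>
     cst t2 y' \<alpha>' \<le> cst t1 y \<alpha> + CB * h + 2 * (gdist N e x2 x1)\<^sup>2 / h + \<epsilon>' * T
        + (2 * h / \<eta>) * (CB * T) + (4 * h / \<eta>) * (E0 / 2)"
proof -
  define q where "q = t2 + h"
  define d where "d = gdist N e x2 x1"
  have q: "t2 < q" "q < T" "T - q \<ge> \<eta> / 2" "q - t2 = h" unfolding q_def using t2 h eta by auto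
  have t1T: "t1 < T" "T - t1 \<ge> \<eta>" using t1 eta by auto
  obtain yp \<alpha>p where P: "admissible N e q t2 x2 yp \<alpha>p" and ypq: "yp q = x1"
    and sp: "\<forall>\<tau>. \<bar>snd (\<alpha>p \<tau>)\<bar> \<le> 2 * d / h"
    using path[OF x1 x2 q(1)] unfolding d_def q(4) by blast
  define k where "k = (T - t1) / (T - q)"
  have k: "k > 0" unfolding k_def using t1T q by simp
  have kk: "k * (T - q) = T - t1" unfolding k_def using q by simp
  define \<phi> where "\<phi> \<tau> = t1 + k * (\<tau> - q)" for \<tau>
  define y' where "y' s = y (\<phi> s)" for s
  define \<alpha>' where "\<alpha>' s = (fst (\<alpha> (\<phi> s)), k * snd (\<alpha> (\<phi> s)))" for s
  have R2: "admissible N e T q x1 y' \<alpha>'"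
    unfolding y'_def[abs_def] \<alpha>'_def[abs_def] \<phi>_def k_def by (rule adm_rescale[OF A t1T(1) q(2)])
  have R2': "admissible N e T q (yp q) y' \<alpha>'" using R2 ypq by simp
  define Y where "Y s = (if s \<le> q then yp s else y' s)" for s
  define Al where "Al s = (if s \<le> q then \<alpha>p s else \<alpha>' s)" for s
  have Yadm: "admissible N e T t2 x2 Y Al"
    unfolding Y_def[abs_def] Al_def[abs_def] by (rule adm_concat[OF P R2']) (use q in auto)
  define W where "W \<tau> = L (Y \<tau>) \<tau> + (snd (Al \<tau>))\<^sup>2 / 2" for \<tau>
  have iW: "W integrable_on {t2..T}"
  proof -
    have i1: "(\<lambda>\<tau>. L (Y \<tau>) \<tau>) integrable_on {t2..T}" by (rule adm_int_L[OF Yadm t2(1)]) simp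
    have "(\<lambda>\<tau>. (1/2) *\<^sub>R (snd (Al \<tau>))\<^sup>2) integrable_on {t2..T}" by (rule integrable_cmul[OF adm_D(5)[OF Yadm]])
    then have i2: "(\<lambda>\<tau>. (snd (Al \<tau>))\<^sup>2 / 2) integrable_on {t2..T}" by simp
    show ?thesis unfolding W_def[abs_def] by (rule Henstock_Kurzweil_Integration.integrable_add[OF i1 i2])
  qed
  have cnew: "cst t2 Y Al = integral {t2..T} W + gf (Y T)"
    unfolding cost_def W_def ..
  have split: "integral {t2..T} W = integral {t2..q} W + integral {q..T} W"
    using Henstock_Kurzweil_Integration.integral_combine[of t2 q T W] q iW by simp
  have part1: "integral {t2..q} W \<le> CB * h + 2 * d\<^sup>2 / h"
  proof -
    have iW1: "W integrable_on {t2..q}" by (rule integrable_on_subinterval[OF iW]) (use q in auto)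
    have "integral {t2..q} W \<le> integral {t2..q} (\<lambda>\<tau>. CB + (2 * d / h)\<^sup>2 / 2)"
    proof (rule integral_le[OF iW1 integrable_const_ivl])
      fix \<tau> assume tau: "\<tau> \<in> {t2..q}"
      have "Y \<tau> = yp \<tau>" "Al \<tau> = \<alpha>p \<tau>" using tau unfolding Y_def Al_def by auto
      moreover have "yp \<tau> \<in> G" using adm_D(1)[OF P] tau by blast
      moreover have "\<tau> \<in> {0..T}" using tau t2 q by auto
      ultimately have "L (Y \<tau>) \<tau> \<le> CB" using CB(2)[of "yp \<tau>" \<tau>] by simp
      moreover have "(snd (Al \<tau>))\<^sup>2 \<le> (2 * d / h)\<^sup>2"
        using sq_le_of_abs[OF spec[OF sp, of \<tau>]] \<open>Al \<tau> = \<alpha>p \<tau>\<close> by simp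
      ultimately show "W \<tau> \<le> CB + (2 * d / h)\<^sup>2 / 2" unfolding W_def by simp
    qed
    also have "\<dots> = h * (CB + (2 * d / h)\<^sup>2 / 2)" using q by simp
    also have "\<dots> = CB * h + 2 * d\<^sup>2 / h" using h by (simp add: field_simps power2_eq_square)
    finally show ?thesis .
  qed
  define Aint where "Aint = integral {t1..T} (\<lambda>r. L (y r) r)"
  define Eint where "Eint = integral {t1..T} (\<lambda>r. (snd (\<alpha> r))\<^sup>2)"
  have Eint: "0 \<le> Eint" "Eint \<le> E0" unfolding Eint_def using E_nonneg[OF A] E by auto
  have Aint: "\<bar>Aint\<bar> \<le> CB * T"
  proof -
    have "\<bar>Aint\<bar> \<le> CB * (T - t1)" unfolding Aint_def by (rule intL_bound[OF A t1(1)]) (use t1T in auto)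
    also have "\<dots> \<le> CB * T" using CB(1) t1 by (simp add: mult_left_mono)
    finally show ?thesis .
  qed
  have phi_rng: "\<phi> \<tau> \<in> {t1..T}" if "\<tau> \<in> {q..T}" for \<tau>
  proof -
    have "0 \<le> k * (\<tau> - q)" using that k by simp
    moreover have "k * (\<tau> - q) \<le> k * (T - q)" using that k by simp
    ultimately show ?thesis unfolding \<phi>_def using kk by auto
  qed
  have phi_close: "\<bar>\<phi> \<tau> - \<tau>\<bar> < 2 * h" if tau: "\<tau> \<in> {q..T}" for \<tau>
  proof -
    have "(\<phi> \<tau> - \<tau>) * (T - q) = (t1 - \<tau>) * (T - q) + (\<tau> - q) * (k * (T - q))"
      unfolding \<phi>_def by (simp add: algebra_simps)
    also have "\<dots> = (t1 - q) * (T - \<tau>)" unfolding kk by (simp add: algebra_simps)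
    finally have eq: "(\<phi> \<tau> - \<tau>) * (T - q) = (t1 - q) * (T - \<tau>)" .
    have "\<bar>\<phi> \<tau> - \<tau>\<bar> * (T - q) = \<bar>t1 - q\<bar> * (T - \<tau>)" using eq tau q
      by (metis abs_mult abs_of_nonneg diff_ge_0_iff_ge atLeastAtMost_iff less_imp_le)
    also have "\<dots> \<le> \<bar>t1 - q\<bar> * (T - q)" using tau by (simp add: mult_left_mono)
    finally have "\<bar>\<phi> \<tau> - \<tau>\<bar> \<le> \<bar>t1 - q\<bar>" using q by simp
    moreover have "\<bar>t1 - q\<bar> < 2 * h" unfolding q_def using dt h by linarith
    ultimately show ?thesis by linarith
  qed
  have shift: "\<forall>\<tau>\<in>{q..T}. L (y (t1 + k * (\<tau> - q))) \<tau> \<le> L (y (t1 + k * (\<tau> - q))) (t1 + k * (\<tau> - q)) + \<epsilon>'"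
  proof
    fix \<tau> assume tau: "\<tau> \<in> {q..T}"
    have r: "\<phi> \<tau> \<in> {t1..T}" by (rule phi_rng[OF tau])
    have yG: "y (\<phi> \<tau>) \<in> G" using adm_D(1)[OF A] r by blast
    have b1: "norm (y (\<phi> \<tau>) - x1) \<le> ((T - t1) + Eint) / 2" unfolding Eint_def by (rule adm_bound[OF A r])
    have b2: "((T - t1) + Eint) / 2 \<le> (T + E0) / 2" using Eint t1 by simp
    have nb: "norm (y (\<phi> \<tau>)) \<le> R + (T + E0) / 2"
      using norm_triangle_ineq2[of "y (\<phi> \<tau>)" x1] nx b1 b2 by linarith
    have tt1: "\<tau> \<in> {0..T}" using tau q(1) t2(1) by simp
    have tt2: "\<phi> \<tau> \<in> {0..T}" using r t1(1) by simp
    note tt = tt1 tt2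
    have "\<bar>L (y (\<phi> \<tau>)) (\<phi> \<tau>) - L (y (\<phi> \<tau>)) \<tau>\<bar> \<le> \<epsilon>'"
      by (rule UCh[rule_format, OF yG nb tt(2) tt(1) phi_close[OF tau]])
    then show "L (y (t1 + k * (\<tau> - q))) \<tau> \<le> L (y (t1 + k * (\<tau> - q))) (t1 + k * (\<tau> - q)) + \<epsilon>'"
      unfolding \<phi>_def by linarith
  qed
  have part2: "integral {q..T} W \<le> Aint / k + k * (Eint / 2) + \<epsilon>' * (T - q)"
  proof -
    have "integral {q..T} W = integral {q..T} (\<lambda>\<tau>. L (y (t1 + k * (\<tau> - q))) \<tau> + (k * snd (\<alpha> (t1 + k * (\<tau> - q))))\<^sup>2 / 2)"
    proof (rule integral_spike[of "{q}"])
      fix \<tau> assume "\<tau> \<in> {q..T} - {q}"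
      then have "\<tau> > q" by auto
      then show "L (y (t1 + k * (\<tau> - q))) \<tau> + (k * snd (\<alpha> (t1 + k * (\<tau> - q))))\<^sup>2 / 2 = W \<tau>"
        unfolding W_def Y_def Al_def y'_def \<alpha>'_def \<phi>_def by simp
    qed simp
    also have "\<dots> \<le> Aint / k + k * (Eint / 2) + \<epsilon>' * (T - q)"
      unfolding Aint_def Eint_def by (rule phase2[OF A t1(1) t1T(1) _ q(2) k_def shift]) (use q t2 in auto)
    finally show ?thesis .
  qed
  have YT: "Y T = y T"
  proof -
    have "\<phi> T = T" unfolding \<phi>_def using kk by simp
    then show ?thesis unfolding Y_def y'_def using q by simp
  qed
  have cold: "cst t1 y \<alpha> = Aint + Eint / 2 + gf (y T)"
    unfolding Aint_def Eint_def by (rule cost_split[OF A t1(1)])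
  have ar1: "Aint / k - Aint \<le> (2 * h / \<eta>) * (CB * T)"
  proof -
    have ik1: "1 / k = (T - q) / (T - t1)" unfolding k_def by simp
    have "(T - q) / (T - t1) - 1 = (T - q) / (T - t1) - (T - t1) / (T - t1)" using t1T by simp
    also have "\<dots> = ((T - q) - (T - t1)) / (T - t1)" by (rule diff_divide_distrib[symmetric])
    also have "\<dots> = (t1 - q) / (T - t1)" by simp
    finally have ik: "1 / k - 1 = (t1 - q) / (T - t1)" unfolding ik1 .
    have a1: "\<bar>t1 - q\<bar> \<le> 2 * h" unfolding q_def using dt h by linarith
    have "\<bar>1 / k - 1\<bar> = \<bar>t1 - q\<bar> / (T - t1)" unfolding ik using t1T by (simp add: abs_div)
    also have "\<dots> \<le> (2 * h) / \<eta>" by (rule frac_le) (use a1 h eta t1T in auto)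
    finally have kb: "\<bar>1 / k - 1\<bar> \<le> 2 * h / \<eta>" .
    have "Aint / k - Aint = Aint * (1 / k - 1)" by (simp add: algebra_simps)
    also have "\<dots> \<le> \<bar>Aint\<bar> * \<bar>1 / k - 1\<bar>" by (simp add: abs_mult[symmetric])
    also have "\<dots> \<le> (CB * T) * (2 * h / \<eta>)"
      by (rule mult_mono[OF Aint kb]) (use CB(1) Tpos in auto)
    finally show ?thesis by (simp add: mult.commute)
  qed
  have ar2: "k * (Eint / 2) - Eint / 2 \<le> (4 * h / \<eta>) * (E0 / 2)"
  proof -
    have "(T - t1) / (T - q) - 1 = (T - t1) / (T - q) - (T - q) / (T - q)" using q by simp
    also have "\<dots> = ((T - t1) - (T - q)) / (T - q)" by (rule diff_divide_distrib[symmetric])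
    also have "\<dots> = (q - t1) / (T - q)" by simp
    finally have km: "k - 1 = (q - t1) / (T - q)" unfolding k_def .
    have a1: "\<bar>q - t1\<bar> \<le> 2 * h" unfolding q_def using dt h by linarith
    have "\<bar>k - 1\<bar> = \<bar>q - t1\<bar> / (T - q)" unfolding km using q by (simp add: abs_div)
    also have "\<dots> \<le> (2 * h) / (\<eta> / 2)" by (rule frac_le) (use a1 h eta q in auto)
    also have "(2 * h) / (\<eta> / 2) = 4 * h / \<eta>" by simp
    finally have kb: "\<bar>k - 1\<bar> \<le> 4 * h / \<eta>" .
    have "k * (Eint / 2) - Eint / 2 = (k - 1) * (Eint / 2)" by (simp add: algebra_simps)
    also have "\<dots> \<le> \<bar>k - 1\<bar> * (Eint / 2)" using Eint by (simp add: mult_right_mono)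
    also have "\<dots> \<le> (4 * h / \<eta>) * (E0 / 2)"
      by (rule mult_mono[OF kb]) (use Eint h eta in auto)
    finally show ?thesis .
  qed
  have ar3: "\<epsilon>' * (T - q) \<le> \<epsilon>' * T" using ep q t2 by (simp add: mult_left_mono)
  have "cst t2 Y Al \<le> cst t1 y \<alpha> + CB * h + 2 * d\<^sup>2 / h + \<epsilon>' * T
        + (2 * h / \<eta>) * (CB * T) + (4 * h / \<eta>) * (E0 / 2)"
  proof -
    have gY: "gf (Y T) = gf (y T)" using YT by simp
    show ?thesis using cnew split part1 part2 gY cold ar1 ar2 ar3 by linarith
  qed
  then show ?thesis using Yadm unfolding d_def by blast
qed

end


context SG
begin

lemma one_side:
  assumes ep: "\<epsilon> > 0" and eta: "\<eta> > 0"
  shows "\<exists>\<delta>>0. \<forall>x1 x2 t1 t2. x1 \<in> G \<and> x2 \<in> G \<and> norm x1 \<le> R \<and> t1 \<in> {0..T - \<eta>} \<and> t2 \<in> {0..T - \<eta>}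
      \<and> gdist N e x2 x1 < \<delta> \<and> \<bar>t1 - t2\<bar> < \<delta> \<longrightarrow> u x2 t2 \<le> u x1 t1 + \<epsilon>"
proof -
  define E0 where "E0 = 2 * (2 * (CB * T) + 2 * CB + 1)"
  have E0: "E0 \<ge> 0" unfolding E0_def using CB(1) Tpos by simp
  define \<epsilon>' where "\<epsilon>' = \<epsilon> / (4 * (T + 1))"
  have ep': "\<epsilon>' > 0" unfolding \<epsilon>'_def using ep Tpos by simp
  have ep'T: "\<epsilon>' * T \<le> \<epsilon> / 4"
  proof -
    have "\<epsilon>' * T = (\<epsilon> / 4) * (T / (T + 1))" unfolding \<epsilon>'_def by simp
    also have "\<dots> \<le> (\<epsilon> / 4) * 1" using ep Tpos by (intro mult_left_mono) auto
    finally show ?thesis by simp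
  qed
  obtain \<rho> where rho: "\<rho> > 0"
    "\<forall>z\<in>G. norm z \<le> R + (T + E0) / 2 \<longrightarrow> (\<forall>s1\<in>{0..T}. \<forall>s2\<in>{0..T}. \<bar>s1 - s2\<bar> < \<rho> \<longrightarrow> \<bar>L z s1 - L z s2\<bar> \<le> \<epsilon>')"
    using UC[OF ep', of "R + (T + E0) / 2"] by blast
  define h where "h = min (min (\<eta> / 2) (\<rho> / 2)) (min (\<epsilon> / (8 * (CB + 1))) (min (\<epsilon> * \<eta> / (16 * (CB * T + 1))) (\<epsilon> * \<eta> / (16 * (E0 + 1)))))"
  have CBT: "CB * T \<ge> 0" using CB(1) Tpos by simp
  have hpos: "h > 0" unfolding h_def using eta rho ep CB(1) CBT E0 by auto
  have hm: "h \<le> min (\<eta> / 2) (\<rho> / 2)" unfolding h_def by (rule min.cobounded1)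
  have h1: "h \<le> \<eta> / 2" "2 * h \<le> \<rho>" using hm by auto
  have hC: "CB * h \<le> \<epsilon> / 8"
  proof -
    have "h \<le> \<epsilon> / (8 * (CB + 1))" unfolding h_def by auto
    then have "CB * h \<le> CB * (\<epsilon> / (8 * (CB + 1)))" using CB(1) by (rule mult_left_mono)
    also have "\<dots> = (\<epsilon> / 8) * (CB / (CB + 1))" by (simp add: field_simps)
    also have "\<dots> \<le> (\<epsilon> / 8) * 1" using ep CB(1) by (intro mult_left_mono) auto
    finally show ?thesis by simp
  qed
  have hA: "(2 * h / \<eta>) * (CB * T) \<le> \<epsilon> / 8"
  proof -
    have "h \<le> \<epsilon> * \<eta> / (16 * (CB * T + 1))" unfolding h_def by auto
    then have a: "h * (16 * (CB * T + 1)) \<le> \<epsilon> * \<eta>" using CBT by (simp add: le_divide_eq)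
    have b: "16 * (h * (CB * T)) \<le> \<epsilon> * \<eta>" using a hpos by (simp add: algebra_simps)
    have "(2 * h / \<eta>) * (CB * T) = (16 * (h * (CB * T))) / (8 * \<eta>)" using eta by (simp add: field_simps)
    also have "\<dots> \<le> (\<epsilon> * \<eta>) / (8 * \<eta>)" by (rule divide_right_mono[OF b]) (use eta in simp)
    also have "\<dots> = \<epsilon> / 8" using eta by simp
    finally show ?thesis .
  qed
  have hE: "(4 * h / \<eta>) * (E0 / 2) \<le> \<epsilon> / 8"
  proof -
    have "h \<le> \<epsilon> * \<eta> / (16 * (E0 + 1))" unfolding h_def by auto
    then have a: "h * (16 * (E0 + 1)) \<le> \<epsilon> * \<eta>" using E0 by (simp add: le_divide_eq)
    have b: "16 * (h * E0) \<le> \<epsilon> * \<eta>" using a hpos by (simp add: algebra_simps)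
    have "(4 * h / \<eta>) * (E0 / 2) = (16 * (h * E0)) / (8 * \<eta>)" using eta by (simp add: field_simps)
    also have "\<dots> \<le> (\<epsilon> * \<eta>) / (8 * \<eta>)" by (rule divide_right_mono[OF b]) (use eta in simp)
    also have "\<dots> = \<epsilon> / 8" using eta by simp
    finally show ?thesis .
  qed
  define \<delta> where "\<delta> = min (min h 1) (h * \<epsilon> / 16)"
  have dpos: "\<delta> > 0" unfolding \<delta>_def using hpos ep by simp
  show ?thesis
  proof (intro exI[of _ \<delta>] conjI allI impI dpos)
    fix x1 x2 t1 t2
    assume H: "x1 \<in> G \<and> x2 \<in> G \<and> norm x1 \<le> R \<and> t1 \<in> {0..T - \<eta>} \<and> t2 \<in> {0..T - \<eta>} \<and> gdist N e x2 x1 < \<delta> \<and> \<bar>t1 - t2\<bar> < \<delta>"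
    then have x1: "x1 \<in> G" and x2: "x2 \<in> G" and nx: "norm x1 \<le> R" and t1: "0 \<le> t1" "t1 \<le> T - \<eta>"
      and t2: "0 \<le> t2" "t2 \<le> T - \<eta>" and dd: "gdist N e x2 x1 < \<delta>" and dt: "\<bar>t1 - t2\<bar> < \<delta>"
      by auto
    have t1T: "t1 < T" using t1 eta by simp
    define \<epsilon>1 where "\<epsilon>1 = min 1 (\<epsilon> / 8)"
    have e1: "\<epsilon>1 > 0" "\<epsilon>1 \<le> 1" "\<epsilon>1 \<le> \<epsilon> / 8" unfolding \<epsilon>1_def using ep by auto
    obtain y \<alpha> where A: "admissible N e T t1 x1 y \<alpha>" and cy: "cst t1 y \<alpha> < u x1 t1 + \<epsilon>1"
      using u_props(3)[OF x1 t1(1) t1T e1(1)] by blast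
    have "cst t1 y \<alpha> \<ge> - CB * T - CB + integral {t1..T} (\<lambda>\<tau>. (snd (\<alpha> \<tau>))\<^sup>2) / 2"
      by (rule cost_lower[OF A t1(1)]) (use t1T in simp)
    moreover have ub: "u x1 t1 \<le> CB * T + CB" by (rule u_props(2)[OF x1 t1(1) t1T])
    ultimately have s1: "integral {t1..T} (\<lambda>r. (snd (\<alpha> r))\<^sup>2) / 2 \<le> cst t1 y \<alpha> + CB * T + CB"
      by simp
    have s2: "cst t1 y \<alpha> < CB * T + CB + 1" using cy e1 ub by linarith
    have s3: "integral {t1..T} (\<lambda>r. (snd (\<alpha> r))\<^sup>2) / 2 < 2 * (CB * T) + 2 * CB + 1"
      using s1 s2 by linarith
    have Eb: "integral {t1..T} (\<lambda>r. (snd (\<alpha> r))\<^sup>2) \<le> E0"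
      using s3 unfolding E0_def by simp
    have dth: "\<bar>t1 - t2\<bar> < h" using dt unfolding \<delta>_def by simp
    have UCh: "\<forall>z\<in>G. norm z \<le> R + (T + E0) / 2 \<longrightarrow> (\<forall>s1\<in>{0..T}. \<forall>s2\<in>{0..T}. \<bar>s1 - s2\<bar> < 2 * h \<longrightarrow> \<bar>L z s1 - L z s2\<bar> \<le> \<epsilon>')"
      using rho(2) h1(2) by force
    obtain y' \<alpha>' where A': "admissible N e T t2 x2 y' \<alpha>'"
      and c': "cst t2 y' \<alpha>' \<le> cst t1 y \<alpha> + CB * h + 2 * (gdist N e x2 x1)\<^sup>2 / h + \<epsilon>' * T
        + (2 * h / \<eta>) * (CB * T) + (4 * h / \<eta>) * (E0 / 2)"
      using core_step[OF x1 x2 t1 t2 eta hpos h1(1) dth A Eb nx less_imp_le[OF ep'] UCh] by blast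
    have dsq: "2 * (gdist N e x2 x1)\<^sup>2 / h \<le> \<epsilon> / 8"
    proof -
      define d where "d = gdist N e x2 x1"
      have d0: "0 \<le> d" unfolding d_def using gdist_ge[of x2 x1] norm_ge_zero order_trans by blast
      have d1: "d \<le> 1" "d \<le> h * \<epsilon> / 16" using dd unfolding d_def \<delta>_def by auto
      have "d\<^sup>2 \<le> d" using d0 d1(1) by (simp add: power2_eq_square mult_left_le)
      also have "\<dots> \<le> h * \<epsilon> / 16" by (rule d1(2))
      finally have "2 * d\<^sup>2 \<le> h * (\<epsilon> / 8)" by simp
      then have "2 * d\<^sup>2 / h \<le> \<epsilon> / 8" using hpos by (simp add: divide_le_eq mult.commute)
      then show ?thesis unfolding d_def .
    qed
    have "u x2 t2 \<le> cst t2 y' \<alpha>'" by (rule u_props(1)[OF x2 t2(1) _ A']) (use t2 eta in simp)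
    then show "u x2 t2 \<le> u x1 t1 + \<epsilon>"
      using c' cy e1 hC hA hE dsq ep'T by linarith
  qed
qed

end



theorem mainTheorem6:
  fixes N :: nat and e :: "nat \<Rightarrow> 'a::euclidean_space" and T :: real
    and l :: "nat \<Rightarrow> 'a \<Rightarrow> real \<Rightarrow> real" and ls :: "real \<Rightarrow> real"
    and g :: "nat \<Rightarrow> 'a \<Rightarrow> real" and gs :: real
  assumes N2: "N \<ge> 2"
    and unit: "\<forall>i\<in>{1..N}. norm (e i) = 1"
    and distinct: "inj_on e {1..N}"
    and Tpos: "T > 0"
    and l_cont: "\<forall>i\<in>{1..N}. continuous_on (J_edge (e i) \<times> {0..T}) (\<lambda>(x, t). l i x t)"
    and l_bdd: "\<forall>i\<in>{1..N}. bounded ((\<lambda>(x, t). l i x t) ` (J_edge (e i) \<times> {0..T}))"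
    and g_cont: "\<forall>i\<in>{1..N}. continuous_on (J_edge (e i)) (g i)"
    and g_bdd: "\<forall>i\<in>{1..N}. bounded (g i ` J_edge (e i))"
    and ls_cont: "continuous_on {0..T} ls"
    and ls_bdd: "bounded (ls ` {0..T})"
  shows "\<forall>x\<in>Graph N e. \<forall>t\<in>{0..<T}. \<forall>\<epsilon>>0. \<exists>\<delta>>0.
           \<forall>x'\<in>Graph N e. \<forall>t'\<in>{0..<T}.
             gdist N e x x' < \<delta> \<and> \<bar>t' - t\<bar> < \<delta> \<longrightarrow>
             \<bar>value_fun N e l ls g gs T x' t' - value_fun N e l ls g gs T x t\<bar> < \<epsilon>"
proof -
  interpret S: SG N e T l ls g gs
    by (rule SG.intro) (fact N2 unit distinct Tpos l_cont l_bdd g_cont g_bdd ls_cont ls_bdd)+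
  have main: "\<exists>\<delta>>0. \<forall>x'\<in>Graph N e. \<forall>t'\<in>{0..<T}.
             gdist N e x x' < \<delta> \<and> \<bar>t' - t\<bar> < \<delta> \<longrightarrow>
             \<bar>value_fun N e l ls g gs T x' t' - value_fun N e l ls g gs T x t\<bar> < \<epsilon>"
    if x: "x \<in> Graph N e" and t: "t \<in> {0..<T}" and ep: "\<epsilon> > 0" for x t \<epsilon>
  proof -
    define \<eta> where "\<eta> = (T - t) / 2"
    have eta: "\<eta> > 0" unfolding \<eta>_def using t by simp
    obtain \<delta> where d: "\<delta> > 0" and P: "\<forall>x1 x2 t1 t2. x1 \<in> Graph N e \<and> x2 \<in> Graph N e \<and> norm x1 \<le> norm x + 1
        \<and> t1 \<in> {0..T - \<eta>} \<and> t2 \<in> {0..T - \<eta>} \<and> gdist N e x2 x1 < \<delta> \<and> \<bar>t1 - t2\<bar> < \<delta>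
        \<longrightarrow> value_fun N e l ls g gs T x2 t2 \<le> value_fun N e l ls g gs T x1 t1 + \<epsilon> / 2"
      using S.one_side[of "\<epsilon> / 2" \<eta> "norm x + 1"] ep eta by auto
    define \<delta>' where "\<delta>' = min (min \<delta> \<eta>) 1"
    have d': "\<delta>' > 0" unfolding \<delta>'_def using d eta by simp
    show ?thesis
    proof (intro exI[of _ \<delta>'] conjI d' ballI impI)
      fix x' t' assume x': "x' \<in> Graph N e" and t': "t' \<in> {0..<T}"
        and H: "gdist N e x x' < \<delta>' \<and> \<bar>t' - t\<bar> < \<delta>'"
      have g1: "gdist N e x x' < \<delta>" "gdist N e x x' < 1" "\<bar>t' - t\<bar> < \<delta>" "\<bar>t' - t\<bar> < \<eta>"
        using H unfolding \<delta>'_def by auto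
      have g2: "gdist N e x' x < \<delta>" using g1 S.gdist_sym by simp
      have e2: "T - \<eta> = t + \<eta>" unfolding \<eta>_def by (simp add: field_simps)
      have tt: "t \<in> {0..T - \<eta>}" "t' \<in> {0..T - \<eta>}" using t t' g1(4) eta unfolding e2 by auto
      have nx: "norm x \<le> norm x + 1" by simp
      have nx': "norm x' \<le> norm x + 1"
        using S.gdist_ge[of x x'] g1(2) norm_triangle_ineq3[of x' x] norm_minus_commute[of x x'] by linarith
      have dt1: "\<bar>t - t'\<bar> < \<delta>" using g1(3) by linarith
      have u1: "value_fun N e l ls g gs T x' t' \<le> value_fun N e l ls g gs T x t + \<epsilon> / 2"
        using P x x' nx tt g2 dt1 by blast
      have u2: "value_fun N e l ls g gs T x t \<le> value_fun N e l ls g gs T x' t' + \<epsilon> / 2"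
        using P x x' nx' tt g1(1) g1(3) by blast
      show "\<bar>value_fun N e l ls g gs T x' t' - value_fun N e l ls g gs T x t\<bar> < \<epsilon>"
        using u1 u2 ep by linarith
    qed
  qed
  show ?thesis using main by blast
qed


end
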